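(* Let $1<p<\infty$. (i) For every $\varphi\in W^{1,p}(X,\nu)\cap L^\infty(X,\nu)$ and $\delta>0$ there is a sequence $(\varphi_n)\subset C^1_b(X)$ with $\|\varphi_n\|_\infty\le(1+\delta)\|\varphi\|_{L^\infty(X,\nu)}$ and $\varphi_n\to\varphi$ in $W^{1,p}(X,\nu)$. (ii) If $\varphi,\psi\in W^{1,p}(X,\nu)\cap L^\infty(X,\nu)$, then $\varphi\psi\in W^{1,p}(X,\nu)$ and $M_p(\varphi\psi)=\varphi M_p\psi+\psi M_p\varphi$.
   Context: $X$ separable real Hilbert space, $\nu$ Borel probability measure on $X$, $R\in\mathcal L(X)$. $C^1_b(X)$: bounded continuously Fréchet differentiable $\varphi:X\to\mathbb R$ with bounded gradient. Standing assumption: for every $z\in X$ there is $v_z\in\bigcap_{r>1}L^r(X,\nu)$ with $\int_X\langle R\nabla\varphi,z\rangle d\nu=\int_Xv_z\varphi\,d\nu$ for $\varphi\in C^1_b(X)$. $M_p$ is the closure in $L^p(X,\nu)$ of $R\nabla:C^1_b(X)\to L^p(X,\nu;X)$ and $W^{1,p}(X,\nu)$ is its domain with the graph norm $\|f\|_{L^p(X,\nu)}+\|M_pf\|_{L^p(X,\nu;X)}$. *)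

theory Defs
  imports "HOL-Analysis.Analysis" "HOL-Probability.Probability"
begin

definition grad :: "('a::real_inner \<Rightarrow> real) \<Rightarrow> 'a \<Rightarrow> 'a" where
  "grad f x = (SOME g. (f has_derivative (\<lambda>h. g \<bullet> h)) (at x))"

definition C1b :: "('a::real_inner \<Rightarrow> real) set" where
  "C1b = {f. bounded (range f)
            \<and> (\<forall>x. \<exists>g. (f has_derivative (\<lambda>h. g \<bullet> h)) (at x))
            \<and> continuous_on UNIV (grad f)
            \<and> bounded (range (grad f))}"

definition in_Lp :: "'a measure \<Rightarrow> real \<Rightarrow> ('a \<Rightarrow> 'b::{real_normed_vector,second_countable_topology}) \<Rightarrow> bool" where
  "in_Lp M p f \<longleftrightarrow> f \<in> borel_measurable M \<and> integrable M (\<lambda>x. norm (f x) powr p)"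

definition Lp_conv :: "'a measure \<Rightarrow> real \<Rightarrow> (nat \<Rightarrow> 'a \<Rightarrow> 'b::real_normed_vector) \<Rightarrow> ('a \<Rightarrow> 'b) \<Rightarrow> bool" where
  "Lp_conv M p F f \<longleftrightarrow>
     ((\<lambda>n. \<integral>\<^sup>+ x. ennreal (norm (F n x - f x) powr p) \<partial>M) \<longlongrightarrow> 0) sequentially"

text \<open>Graph of the closure M_p of R\<nabla> : C^1_b \<rightarrow> L^p(X;X): (f,g) in the graph iff
  f = L^p-lim \<phi>_n and g = L^p-lim R\<nabla>\<phi>_n for some \<phi>_n in C^1_b.\<close>
definition Mp_graph :: "'a::{real_inner,polish_space} measure \<Rightarrow> ('a \<Rightarrow>\<^sub>L 'a) \<Rightarrow> real
    \<Rightarrow> ('a \<Rightarrow> real) \<Rightarrow> ('a \<Rightarrow> 'a) \<Rightarrow> bool" where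
  "Mp_graph M R p f g \<longleftrightarrow> in_Lp M p f \<and> in_Lp M p g \<and>
     (\<exists>F. (\<forall>n. F n \<in> C1b) \<and> Lp_conv M p F f
          \<and> Lp_conv M p (\<lambda>n x. blinfun_apply R (grad (F n) x)) g)"

definition W1p :: "'a::{real_inner,polish_space} measure \<Rightarrow> ('a \<Rightarrow>\<^sub>L 'a) \<Rightarrow> real \<Rightarrow> ('a \<Rightarrow> real) set" where
  "W1p M R p = {f. \<exists>g. Mp_graph M R p f g}"

definition in_Linf :: "'a measure \<Rightarrow> ('a \<Rightarrow> real) \<Rightarrow> bool" where
  "in_Linf M f \<longleftrightarrow> f \<in> borel_measurable M \<and> (\<exists>C. AE x in M. \<bar>f x\<bar> \<le> C)"

definition Linf_norm :: "'a measure \<Rightarrow> ('a \<Rightarrow> real) \<Rightarrow> real" where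
  "Linf_norm M f = real_of_ereal (esssup M (\<lambda>x. ereal \<bar>f x\<bar>))"

end

theory Submission
  imports Defs
begin
lemma grad_eqI:
  fixes f :: "'a::real_inner \<Rightarrow> real"
  assumes "(f has_derivative (\<lambda>h. g \<bullet> h)) (at x)"
  shows "grad f x = g"
proof -
  have "(f has_derivative (\<lambda>h. grad f x \<bullet> h)) (at x)"
    unfolding grad_def by (rule someI[of _ g]) (rule assms)
  then have "(\<lambda>h. grad f x \<bullet> h) = (\<lambda>h. g \<bullet> h)"
    using assms by (rule has_derivative_unique)
  then have "(grad f x - g) \<bullet> (grad f x - g) = 0"
    by (metis inner_diff_left right_minus_eq)
  then show ?thesis by simp
qed

lemma C1bI:
  fixes f :: "'a::real_inner \<Rightarrow> real"
  assumes d: "\<And>x. (f has_derivative (\<lambda>h. G x \<bullet> h)) (at x)"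
    and c: "continuous_on UNIV G"
    and b1: "\<And>x. \<bar>f x\<bar> \<le> B1" and b2: "\<And>x. norm (G x) \<le> B2"
  shows "f \<in> C1b" "grad f = G"
proof -
  have g: "grad f = G" using grad_eqI[OF d] by auto
  show "grad f = G" by fact
  show "f \<in> C1b" unfolding C1b_def
    using d c b1 b2 by (auto simp: g bounded_iff intro!: exI)
qed

lemma C1bD:
  fixes f :: "'a::real_inner \<Rightarrow> real"
  assumes "f \<in> C1b"
  shows "(f has_derivative (\<lambda>h. grad f x \<bullet> h)) (at x)"
    "continuous_on UNIV (grad f)"
    "\<exists>B. \<forall>x. \<bar>f x\<bar> \<le> B" "\<exists>B. \<forall>x. norm (grad f x) \<le> B"
proof -
  from assms obtain g where "(f has_derivative (\<lambda>h. g \<bullet> h)) (at x)"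
    unfolding C1b_def by auto
  then show "(f has_derivative (\<lambda>h. grad f x \<bullet> h)) (at x)"
    using grad_eqI by metis
  show "continuous_on UNIV (grad f)" using assms unfolding C1b_def by auto
  show "\<exists>B. \<forall>x. \<bar>f x\<bar> \<le> B" using assms unfolding C1b_def bounded_iff by auto
  show "\<exists>B. \<forall>x. norm (grad f x) \<le> B" using assms unfolding C1b_def bounded_iff by auto
qed

lemma C1b_cont: "f \<in> C1b \<Longrightarrow> continuous_on UNIV f"
  by (meson C1bD(1) continuous_at_imp_continuous_on has_derivative_continuous)

lemma C1b_const: "(\<lambda>x. c) \<in> C1b" "grad (\<lambda>x. c) = (\<lambda>x. 0)"
  by (rule C1bI[of _ "\<lambda>x. 0" "\<bar>c\<bar>" 0]; auto intro!: derivative_eq_intros)+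

lemma C1b_add:
  assumes "f \<in> C1b" "g \<in> C1b"
  shows "(\<lambda>x. f x + g x) \<in> C1b" "grad (\<lambda>x. f x + g x) = (\<lambda>x. grad f x + grad g x)"
proof -
  obtain B1 B2 C1 C2 where b: "\<And>x. \<bar>f x\<bar> \<le> B1" "\<And>x. \<bar>g x\<bar> \<le> B2"
    "\<And>x. norm (grad f x) \<le> C1" "\<And>x. norm (grad g x) \<le> C2"
    using C1bD(3,4)[OF assms(1)] C1bD(3,4)[OF assms(2)] by metis
  have d: "((\<lambda>x. f x + g x) has_derivative (\<lambda>h. (grad f x + grad g x) \<bullet> h)) (at x)" for x
    by (rule has_derivative_eq_rhs, rule has_derivative_add[OF C1bD(1)[OF assms(1)] C1bD(1)[OF assms(2)]])
      (simp add: inner_add_left)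
  have c: "continuous_on UNIV (\<lambda>x. grad f x + grad g x)"
    using C1bD(2)[OF assms(1)] C1bD(2)[OF assms(2)] by (intro continuous_intros)
  have b1: "\<bar>f x + g x\<bar> \<le> B1 + B2" for x using b(1,2)[of x] by linarith
  have b2: "norm (grad f x + grad g x) \<le> C1 + C2" for x
    using b(3,4)[of x] norm_triangle_ineq[of "grad f x" "grad g x"] by linarith
  show "(\<lambda>x. f x + g x) \<in> C1b" "grad (\<lambda>x. f x + g x) = (\<lambda>x. grad f x + grad g x)"
    using C1bI[OF d c b1 b2] by auto
qed

lemma C1b_mult:
  assumes "f \<in> C1b" "g \<in> C1b"
  shows "(\<lambda>x. f x * g x) \<in> C1b"
    "grad (\<lambda>x. f x * g x) = (\<lambda>x. f x *\<^sub>R grad g x + g x *\<^sub>R grad f x)"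
proof -
  obtain B1 B2 C1 C2 where b: "\<And>x. \<bar>f x\<bar> \<le> B1" "\<And>x. \<bar>g x\<bar> \<le> B2"
    "\<And>x. norm (grad f x) \<le> C1" "\<And>x. norm (grad g x) \<le> C2"
    using C1bD(3,4)[OF assms(1)] C1bD(3,4)[OF assms(2)] by metis
  have d: "((\<lambda>x. f x * g x) has_derivative (\<lambda>h. (f x *\<^sub>R grad g x + g x *\<^sub>R grad f x) \<bullet> h)) (at x)" for x
    by (rule has_derivative_eq_rhs, rule has_derivative_mult[OF C1bD(1)[OF assms(1)] C1bD(1)[OF assms(2)]])
      (auto simp add: inner_add_left algebra_simps)
  have c: "continuous_on UNIV (\<lambda>x. f x *\<^sub>R grad g x + g x *\<^sub>R grad f x)"
    using C1bD(2)[OF assms(1)] C1bD(2)[OF assms(2)] C1b_cont[OF assms(1)] C1b_cont[OF assms(2)]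
    by (intro continuous_intros)
  have b1: "\<bar>f x * g x\<bar> \<le> B1 * B2" for x using b(1,2)[of x]
    by (simp add: abs_mult mult_mono')
  have b2: "norm (f x *\<^sub>R grad g x + g x *\<^sub>R grad f x) \<le> B1 * C2 + B2 * C1" for x
  proof -
    have "norm (f x *\<^sub>R grad g x) \<le> B1 * C2" using b(1,4)[of x] by (simp add: mult_mono')
    moreover have "norm (g x *\<^sub>R grad f x) \<le> B2 * C1" using b(2,3)[of x] by (simp add: mult_mono')
    ultimately show ?thesis
      using norm_triangle_ineq[of "f x *\<^sub>R grad g x" "g x *\<^sub>R grad f x"] by linarith
  qed
  show "(\<lambda>x. f x * g x) \<in> C1b" "grad (\<lambda>x. f x * g x) = (\<lambda>x. f x *\<^sub>R grad g x + g x *\<^sub>R grad f x)"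
    using C1bI[OF d c b1 b2] by auto
qed

lemma C1b_cmult:
  assumes "f \<in> C1b"
  shows "(\<lambda>x. c * f x) \<in> C1b" "grad (\<lambda>x. c * f x) = (\<lambda>x. c *\<^sub>R grad f x)"
  using C1b_mult[OF C1b_const(1) assms, of c] by (auto simp: C1b_const(2))

lemma C1b_diff:
  assumes "f \<in> C1b" "g \<in> C1b"
  shows "(\<lambda>x. f x - g x) \<in> C1b" "grad (\<lambda>x. f x - g x) = (\<lambda>x. grad f x - grad g x)"
  using C1b_add[OF assms(1) C1b_cmult(1)[OF assms(2), of "-1"]] C1b_cmult(2)[OF assms(2), of "-1"]
  by auto

lemma C1b_comp:
  fixes \<theta> \<theta>' :: "real \<Rightarrow> real"
  assumes f: "f \<in> C1b"
    and d: "\<And>t. (\<theta> has_real_derivative \<theta>' t) (at t)"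
    and c: "continuous_on UNIV \<theta>'"
    and b: "\<And>t. \<bar>\<theta> t\<bar> \<le> B" "\<And>t. \<bar>\<theta>' t\<bar> \<le> L"
  shows "(\<lambda>x. \<theta> (f x)) \<in> C1b" "grad (\<lambda>x. \<theta> (f x)) = (\<lambda>x. \<theta>' (f x) *\<^sub>R grad f x)"
proof -
  obtain C where bc: "\<And>x. norm (grad f x) \<le> C" using C1bD(4)[OF f] by metis
  have dd: "((\<lambda>x. \<theta> (f x)) has_derivative (\<lambda>h. (\<theta>' (f x) *\<^sub>R grad f x) \<bullet> h)) (at x)" for x
    by (rule has_derivative_eq_rhs, rule DERIV_compose_FDERIV[OF d C1bD(1)[OF f]])
      (auto simp: algebra_simps)
  have cc: "continuous_on UNIV (\<lambda>x. \<theta>' (f x) *\<^sub>R grad f x)"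
    by (intro continuous_intros C1bD(2)[OF f] continuous_on_compose2[OF c C1b_cont[OF f]]) auto
  have b2: "norm (\<theta>' (f x) *\<^sub>R grad f x) \<le> L * C" for x
    using b(2)[of "f x"] bc[of x] by (simp add: mult_mono')
  show "(\<lambda>x. \<theta> (f x)) \<in> C1b" "grad (\<lambda>x. \<theta> (f x)) = (\<lambda>x. \<theta>' (f x) *\<^sub>R grad f x)"
    using C1bI[OF dd cc b(1) b2] by auto
qed

lemma glue_deriv:
  fixes g h g' h' :: "real \<Rightarrow> real"
  assumes g: "\<And>t. t \<le> c \<Longrightarrow> (g has_real_derivative g' t) (at t)"
    and h: "\<And>t. t \<ge> c \<Longrightarrow> (h has_real_derivative h' t) (at t)"
    and e1: "g c = h c" and e2: "g' c = h' c"
  shows "((\<lambda>t. if t \<le> c then g t else h t) has_real_derivative (if t \<le> c then g' t else h' t)) (at t)"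
proof -
  have cS: "closure {..c} = {..c}" and cT: "closure {c<..} = {c..}" by auto
  have *: "((\<lambda>x. if x \<in> {..c} then g x else h x) has_derivative
      (if t \<in> {..c} then (\<lambda>y. g' t * y) else (\<lambda>y. h' t * y))) (at t within ({..c} \<union> {c<..}))"
  proof (rule has_derivative_If_within_closures)
    show "(g has_derivative (\<lambda>y. g' x * y)) (at x within {..c} \<union> (closure {..c} \<inter> closure {c<..}))"
      if "x \<in> {..c} \<union> (closure {..c} \<inter> closure {c<..})" for x
      using that g[of x] by (auto simp: cS cT has_field_derivative_def intro: has_derivative_at_withinI)
    show "(h has_derivative (\<lambda>y. h' x * y)) (at x within {c<..} \<union> (closure {..c} \<inter> closure {c<..}))"
      if "x \<in> {c<..} \<union> (closure {..c} \<inter> closure {c<..})" for x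
      using that h[of x] by (auto simp: cS cT has_field_derivative_def intro: has_derivative_at_withinI)
    show "g x = h x" if "x \<in> closure {..c}" "x \<in> closure {c<..}" for x
      using that e1 by (auto simp: cS cT)
    show "(\<lambda>y. g' x * y) = (\<lambda>y. h' x * y)" if "x \<in> closure {..c}" "x \<in> closure {c<..}" for x
      using that e2 by (auto simp: cS cT)
  qed auto
  have U: "{..c} \<union> {c<..} = (UNIV::real set)" by auto
  show ?thesis
    using * unfolding U has_field_derivative_def
    by (auto simp: mult.commute split: if_splits elim!: has_derivative_eq_rhs)
qed

definition rho :: "real \<Rightarrow> real \<Rightarrow> real \<Rightarrow> real" where
  "rho a b t = max t a - a - b + b\<^sup>2 / (max t a - a + b)"
definition rho' :: "real \<Rightarrow> real \<Rightarrow> real \<Rightarrow> real" where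
  "rho' a b t = 1 - b\<^sup>2 / (max t a - a + b)\<^sup>2"
definition theta :: "real \<Rightarrow> real \<Rightarrow> real \<Rightarrow> real" where
  "theta a b t = t - rho a b t + rho a b (- t)"
definition theta' :: "real \<Rightarrow> real \<Rightarrow> real \<Rightarrow> real" where
  "theta' a b t = 1 - rho' a b t - rho' a b (- t)"

lemma rho_le: "b > 0 \<Longrightarrow> t \<le> a \<Longrightarrow> rho a b t = 0"
  by (simp add: rho_def max_def power2_eq_square)
lemma rho'_le: "b > 0 \<Longrightarrow> t \<le> a \<Longrightarrow> rho' a b t = 0"
  by (simp add: rho'_def max_def power2_eq_square)

lemma rho_ge: "b > 0 \<Longrightarrow> t \<ge> a \<Longrightarrow> t - rho a b t \<ge> a \<and> t - rho a b t \<le> a + b"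
proof -
  assume b: "b > 0" and t: "t \<ge> a"
  let ?m = "t - a + b"
  have m: "?m \<ge> b" using t by simp
  have e: "t - rho a b t = a + b - b\<^sup>2 / ?m" using t by (simp add: rho_def max_def)
  have "b\<^sup>2 / ?m \<le> b" using m b by (simp add: power2_eq_square divide_le_eq)
  moreover have "b\<^sup>2 / ?m \<ge> 0" using m b by simp
  ultimately show ?thesis using e by linarith
qed

lemma rho'_bounds: "b > 0 \<Longrightarrow> 0 \<le> rho' a b t \<and> rho' a b t \<le> 1"
proof -
  assume b: "b > 0"
  let ?m = "max t a - a + b"
  have m: "?m \<ge> b" by simp
  have "b\<^sup>2 \<le> ?m\<^sup>2" by (rule power_mono) (use m b in auto)
  then have "b\<^sup>2 / ?m\<^sup>2 \<le> 1" using m b by (simp add: divide_le_eq_1)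
  moreover have "b\<^sup>2 / ?m\<^sup>2 \<ge> 0" by simp
  ultimately show ?thesis by (simp add: rho'_def)
qed

lemma rho_deriv:
  assumes b: "b > 0"
  shows "(rho a b has_real_derivative rho' a b t) (at t)"
proof -
  have eq1: "rho a b = (\<lambda>t. if t \<le> a then 0 else t - a - b + b\<^sup>2 / (t - a + b))"
    using b by (auto simp: rho_def max_def power2_eq_square fun_eq_iff)
  have eq2: "rho' a b t = (if t \<le> a then 0 else 1 - b\<^sup>2 / (t - a + b)\<^sup>2)"
    using b by (auto simp: rho'_def max_def power2_eq_square)
  have h: "((\<lambda>t. t - a - b + b\<^sup>2 / (t - a + b)) has_real_derivative 1 - b\<^sup>2 / (t - a + b)\<^sup>2) (at t)"
    if "t \<ge> a" for t
  proof -
    have nz: "t - a + b \<noteq> 0" using that b by simp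
    have d1: "((\<lambda>t. t - a - b + b\<^sup>2 / (t - a + b)) has_real_derivative
       (1 - 0 - 0 + (0 * (t - a + b) - b\<^sup>2 * (1 - 0 + 0)) / ((t - a + b) * (t - a + b)))) (at t)"
      by (intro DERIV_add DERIV_diff DERIV_divide DERIV_ident DERIV_const) (use nz in auto)
    have e: "(1 - 0 - 0 + (0 * (t - a + b) - b\<^sup>2 * (1 - 0 + 0)) / ((t - a + b) * (t - a + b)))
       = 1 - b\<^sup>2 / (t - a + b)\<^sup>2"
      by (simp add: power2_eq_square)
    show ?thesis using d1 unfolding e .
  qed
  show ?thesis unfolding eq1 eq2
    by (rule glue_deriv[where g="\<lambda>t. 0" and g'="\<lambda>t. 0"]) (use h b in \<open>auto simp: power2_eq_square\<close>)
qed

lemma theta_deriv: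
  assumes b: "b > 0"
  shows "(theta a b has_real_derivative theta' a b t) (at t)"
proof -
  have d1: "((\<lambda>t. rho a b (- t)) has_real_derivative rho' a b (- t) * (- 1)) (at t)"
    by (rule DERIV_chain2[OF rho_deriv[OF b]]) (auto intro!: derivative_eq_intros)
  show ?thesis unfolding theta_def[abs_def] theta'_def
    using DERIV_add[OF DERIV_diff[OF DERIV_ident rho_deriv[OF b]] d1] by simp
qed

lemma theta'_cont: "b > 0 \<Longrightarrow> continuous_on UNIV (theta' a b)"
proof -
  assume b: "b > 0"
  have pos: "(max x a - a + b)\<^sup>2 \<noteq> 0" for x a :: real using b by (auto simp: max_def)
  show ?thesis
    unfolding theta'_def[abs_def] rho'_def
    by (intro continuous_intros) (use pos in \<open>simp_all add: less_imp_neq[THEN not_sym]\<close>)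
qed

lemma theta_small: "a > 0 \<Longrightarrow> b > 0 \<Longrightarrow> \<bar>t\<bar> \<le> a \<Longrightarrow> theta a b t = t \<and> theta' a b t = 1"
  by (simp add: theta_def theta'_def rho_le rho'_le)

lemma theta_bound: "a > 0 \<Longrightarrow> b > 0 \<Longrightarrow> \<bar>theta a b t\<bar> \<le> a + b"
proof -
  assume a: "a > 0" and b: "b > 0"
  consider "t \<ge> a" | "t \<le> - a" | "\<bar>t\<bar> \<le> a" by linarith
  then show ?thesis
  proof cases
    case 1
    then have "rho a b (- t) = 0" using a b by (intro rho_le) auto
    then show ?thesis using rho_ge[OF b 1] a unfolding theta_def by auto
  next
    case 2
    then have "rho a b t = 0" using a b by (intro rho_le) auto
    then show ?thesis using rho_ge[OF b, where t="-t" and a=a] 2 a unfolding theta_def by auto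
  next
    case 3
    then show ?thesis using theta_small[OF a b 3] b by auto
  qed
qed

lemma theta'_bound: "a > 0 \<Longrightarrow> b > 0 \<Longrightarrow> 0 \<le> theta' a b t \<and> theta' a b t \<le> 1"
proof -
  assume a: "a > 0" and b: "b > 0"
  have "rho' a b t = 0 \<or> rho' a b (- t) = 0"
    using a b by (cases "t \<le> a") (auto intro: rho'_le)
  then show ?thesis using rho'_bounds[OF b, where t=t and a=a] rho'_bounds[OF b, where t="-t" and a=a]
    unfolding theta'_def by auto
qed

lemma theta_lipschitz:
  assumes a: "a > 0" and b: "b > 0"
  shows "\<bar>theta a b x - theta a b y\<bar> \<le> \<bar>x - y\<bar>"
proof -
  have *: "\<bar>theta a b v - theta a b u\<bar> \<le> \<bar>v - u\<bar>" if uv: "u < v" for u v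
  proof -
    obtain z where "theta a b v - theta a b u = (v - u) * theta' a b z"
      using MVT2[OF uv, where f="theta a b" and f'="theta' a b"] theta_deriv[OF b] by blast
    then show ?thesis using theta'_bound[OF a b, of z] that
      using uv by (simp add: abs_mult mult_le_cancel_left1)
  qed
  show ?thesis
    using *[of x y] *[of y x] by (cases x y rule: linorder_cases) (auto simp: abs_minus_commute)
qed

definition mu :: "real \<Rightarrow> real" where "mu s = (max s 0)\<^sup>2"

lemma mu_deriv: "(mu has_real_derivative 2 * max s 0) (at s)"
proof -
  have eq1: "mu = (\<lambda>t. if t \<le> 0 then 0 else t\<^sup>2)"
    by (auto simp: mu_def max_def fun_eq_iff)
  have eq2: "2 * max s 0 = (if s \<le> 0 then 0 else 2 * s)" by auto
  show ?thesis unfolding eq1 eq2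
    by (rule glue_deriv[where g="\<lambda>t. 0" and g'="\<lambda>t. 0"]) (auto intro!: derivative_eq_intros)
qed

definition bump :: "'a::real_inner \<Rightarrow> real \<Rightarrow> real \<Rightarrow> 'a \<Rightarrow> real" where
  "bump c r k x = 1 - exp (- k * mu (r\<^sup>2 - (x - c) \<bullet> (x - c)))"

lemma mu_nonneg: "mu s \<ge> 0" by (simp add: mu_def)
lemma mu_cont: "continuous_on UNIV mu"
  unfolding mu_def[abs_def] by (intro continuous_intros)

lemma bump_C1b:
  fixes c :: "'a::real_inner"
  assumes r: "r > 0" and k: "k \<ge> 0"
  shows "bump c r k \<in> C1b"
proof -
  define q where "q x = r\<^sup>2 - (x - c) \<bullet> (x - c)" for x
  define G where "G x = (exp (- k * mu (q x)) * k * (2 * max (q x) 0) * 2) *\<^sub>R (c - x)" for x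
  have dq: "(q has_derivative (\<lambda>h. ((- 2) *\<^sub>R (x - c)) \<bullet> h)) (at x)" for x
    unfolding q_def
    by (rule has_derivative_eq_rhs, rule has_derivative_diff[OF has_derivative_const],
        rule has_derivative_inner[OF has_derivative_diff[OF has_derivative_ident has_derivative_const]
          has_derivative_diff[OF has_derivative_ident has_derivative_const]])
      (auto simp: inner_commute algebra_simps fun_eq_iff)
  have dm: "((\<lambda>x. mu (q x)) has_derivative (\<lambda>h. (((- 2) * (2 * max (q x) 0)) *\<^sub>R (x - c)) \<bullet> h)) (at x)" for x
    by (rule has_derivative_eq_rhs, rule DERIV_compose_FDERIV[OF mu_deriv dq]) (auto simp: algebra_simps)
  have de: "((\<lambda>x. exp (- k * mu (q x))) has_derivative
      (\<lambda>h. (exp (- k * mu (q x)) * (- k) * ((- 2) * (2 * max (q x) 0))) *\<^sub>R (x - c) \<bullet> h)) (at x)" for x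
  proof -
    have d1: "((\<lambda>x. - k * mu (q x)) has_derivative
      (\<lambda>h. - k * ((((- 2) * (2 * max (q x) 0)) *\<^sub>R (x - c)) \<bullet> h))) (at x)"
      by (rule has_derivative_mult_right[OF dm])
    show ?thesis
      by (rule has_derivative_eq_rhs, rule DERIV_compose_FDERIV[OF DERIV_exp d1]) (auto simp: algebra_simps)
  qed
  have d: "(bump c r k has_derivative (\<lambda>h. G x \<bullet> h)) (at x)" for x
    unfolding bump_def[abs_def] q_def[symmetric]
    by (rule has_derivative_eq_rhs, rule has_derivative_diff[OF has_derivative_const de])
      (auto simp: G_def algebra_simps fun_eq_iff)
  have cq: "continuous_on UNIV q" unfolding q_def[abs_def] by (intro continuous_intros)
  have cG: "continuous_on UNIV G"
    unfolding G_def[abs_def]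
    by (intro continuous_intros continuous_on_compose2[OF mu_cont cq] cq) auto
  have b1: "\<bar>bump c r k x\<bar> \<le> 1" for x
  proof -
    have "exp (- k * mu (r\<^sup>2 - (x - c) \<bullet> (x - c))) \<le> 1"
      using k mu_nonneg by (simp add: mult_nonneg_nonneg)
    then show ?thesis unfolding bump_def by auto
  qed
  have b2: "norm (G x) \<le> k * (2 * r\<^sup>2) * 2 * r" for x
  proof (cases "q x \<le> 0")
    case True
    then show ?thesis using k r by (simp add: G_def)
  next
    case False
    then have lt: "(x - c) \<bullet> (x - c) < r\<^sup>2" unfolding q_def by simp
    then have n: "norm (c - x) \<le> r" using r
      by (metis norm_lt_square norm_minus_commute less_imp_le)
    have qle: "max (q x) 0 \<le> r\<^sup>2" using False unfolding q_def by auto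
    have ee: "exp (- k * mu (q x)) \<le> 1" using k mu_nonneg by (simp add: mult_nonneg_nonneg)
    have "norm (G x) = exp (- k * mu (q x)) * k * (2 * max (q x) 0) * 2 * norm (c - x)"
      using k unfolding G_def by (simp add: abs_mult)
    also have "\<dots> \<le> 1 * k * (2 * r\<^sup>2) * 2 * r"
      using ee k qle n
      by (intro mult_mono) (auto simp: mult_nonneg_nonneg)
    finally show ?thesis by simp
  qed
  show ?thesis using C1bI(1)[OF d cG b1 b2] .
qed

lemma bump_bounds: "k \<ge> 0 \<Longrightarrow> 0 \<le> bump c r k x \<and> bump c r k x \<le> 1"
  using mu_nonneg[of "r\<^sup>2 - (x - c) \<bullet> (x - c)"]
  by (auto simp: bump_def mult_nonneg_nonneg)

lemma bump_lim:
  fixes c :: "'a::real_inner"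
  assumes r: "r > 0"
  shows "(\<lambda>n. bump c r (real n) x) \<longlonglongrightarrow> indicator (ball c r) x"
proof (cases "x \<in> ball c r")
  case True
  then have "norm (x - c) < r" by (simp add: dist_norm norm_minus_commute)
  then have "(x - c) \<bullet> (x - c) < r\<^sup>2" by (simp add: norm_lt_square)
  then have m: "mu (r\<^sup>2 - (x - c) \<bullet> (x - c)) > 0" by (simp add: mu_def)
  define m where "m = mu (r\<^sup>2 - (x - c) \<bullet> (x - c))"
  have e: "bump c r (real n) x = 1 - exp (- m) ^ n" for n
    unfolding bump_def m_def by (metis exp_of_nat_mult mult_minus_left mult_minus_right)
  have m0: "m > 0" using m by (simp add: m_def)
  have "exp (- m) < 1" using m0 by simp
  then have "(\<lambda>n. exp (- m) ^ n) \<longlonglongrightarrow> 0"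
    using LIMSEQ_power_zero[of "exp (- m)"] by simp
  then have "(\<lambda>n. 1 - exp (- m) ^ n) \<longlonglongrightarrow> 1 - 0" by (intro tendsto_diff tendsto_const)
  then show ?thesis using True unfolding e by simp
next
  case False
  then have "\<not> norm (x - c) < r" by (simp add: dist_norm norm_minus_commute)
  then have "\<not> (x - c) \<bullet> (x - c) < r\<^sup>2" using r by (simp add: norm_lt_square)
  then have "mu (r\<^sup>2 - (x - c) \<bullet> (x - c)) = 0" by (simp add: mu_def)
  then show ?thesis using False by (simp add: bump_def)
qed

lemma C1b_meas:
  assumes "sets M = sets borel" "f \<in> C1b"
  shows "f \<in> borel_measurable M"
  by (subst measurable_cong_sets[OF assms(1) refl])
    (rule borel_measurable_continuous_onI[OF C1b_cont[OF assms(2)]])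

lemma C1b_prod:
  fixes n :: nat
  assumes "\<And>j. j < n \<Longrightarrow> f j \<in> C1b"
  shows "(\<lambda>x. \<Prod>j<n. f j x) \<in> C1b"
  using assms
proof (induction n)
  case 0
  then show ?case using C1b_const(1)[of 1] by simp
next
  case (Suc n)
  then show ?case using C1b_mult(1)[OF Suc.IH Suc.prems[of n]] by (simp add: prod.lessThan_Suc)
qed

lemma prod_indicator:
  fixes n :: nat
  shows "(\<Prod>j<n. 1 - indicator (B j) x :: real) = 1 - indicator (\<Union>j<n. B j) x"
  by (induction n) (auto simp: prod.lessThan_Suc indicator_def lessThan_Suc)

lemma open_integral_zero:
  fixes M :: "'a::{real_inner, polish_space} measure"
  assumes fin: "finite_measure M" and sets: "sets M = sets borel" and h: "integrable M h"
    and z: "\<And>\<psi>. \<psi> \<in> C1b \<Longrightarrow> (\<integral>x. \<psi> x * h x \<partial>M) = 0"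
    and U: "open U"
  shows "(\<integral>x. indicator U x * h x \<partial>M) = 0"
proof (cases "U = {}")
  case True
  then show ?thesis by simp
next
  case False
  have hm[measurable]: "h \<in> borel_measurable M" using h by auto
  define \<B> where "\<B> = {ball c r | c r. r > 0 \<and> ball c r \<subseteq> U}"
  have UB: "\<Union>\<B> = U"
  proof
    show "\<Union>\<B> \<subseteq> U" unfolding \<B>_def by auto
    show "U \<subseteq> \<Union>\<B>"
    proof
      fix x assume "x \<in> U"
      then obtain e where "e > 0" "ball x e \<subseteq> U" using U openE by blast
      then show "x \<in> \<Union>\<B>" unfolding \<B>_def using \<open>e > 0\<close> by (auto intro!: exI[of _ "ball x e"])
    qed
  qed
  obtain \<B>' where B': "\<B>' \<subseteq> \<B>" "countable \<B>'" "\<Union>\<B>' = \<Union>\<B>"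
    using Lindelof[of \<B>] unfolding \<B>_def by blast
  have ne: "\<B>' \<noteq> {}" using B'(3) UB False by auto
  define B where "B = from_nat_into \<B>'"
  have rB: "range B = \<B>'" unfolding B_def using range_from_nat_into[OF ne B'(2)] .
  have "\<forall>j. \<exists>cr. snd cr > 0 \<and> B j = ball (fst cr) (snd cr)"
  proof
    fix j
    have "B j \<in> \<B>" using rB B'(1) by auto
    then show "\<exists>cr. snd cr > 0 \<and> B j = ball (fst cr) (snd cr)" unfolding \<B>_def by force
  qed
  then obtain cr where cr: "\<And>j. snd (cr j) > 0 \<and> B j = ball (fst (cr j)) (snd (cr j))"
    by (metis choice_iff)
  define c where "c j = fst (cr j)" for j
  define r where "r j = snd (cr j)" for j
  have r: "r j > 0" and Bj: "B j = ball (c j) (r j)" for j using cr[of j] by (auto simp: c_def r_def)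
  have Ueq: "U = (\<Union>j. B j)" using rB B'(3) UB by auto
  have Bopen: "open (B j)" for j using Bj by simp
  define V where "V n = (\<Union>j<n. B j)" for n
  have Vint: "(\<integral>x. indicator (V n) x * h x \<partial>M) = 0" for n
  proof -
    define s where "s k x = (1 - (\<Prod>j<n. 1 - bump (c j) (r j) (real k) x)) * h x" for k x
    have sC: "(\<lambda>x. 1 - (\<Prod>j<n. 1 - bump (c j) (r j) (real k) x)) \<in> C1b" for k
    proof -
      have "(\<lambda>x. 1 - bump (c j) (r j) (real k) x) \<in> C1b" for j
        using C1b_diff(1)[OF C1b_const(1) bump_C1b[OF r, of "real k" "c j" j]] by simp
      then have "(\<lambda>x. \<Prod>j<n. 1 - bump (c j) (r j) (real k) x) \<in> C1b"
        by (intro C1b_prod)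
      from C1b_diff(1)[OF C1b_const(1) this] show ?thesis .
    qed
    have s0: "integral\<^sup>L M (s k) = 0" for k unfolding s_def using z[OF sC] .
    have lim: "(\<lambda>k. integral\<^sup>L M (s k)) \<longlonglongrightarrow> (\<integral>x. indicator (V n) x * h x \<partial>M)"
    proof (rule integral_dominated_convergence[where w="\<lambda>x. \<bar>h x\<bar>"])
      show "(\<lambda>x. indicator (V n) x * h x) \<in> borel_measurable M"
        unfolding V_def using Bopen sets by (intro borel_measurable_times hm borel_measurable_indicator) auto
      show "s k \<in> borel_measurable M" for k
        unfolding s_def by (intro borel_measurable_times hm C1b_meas[OF sets sC])
      show "integrable M (\<lambda>x. \<bar>h x\<bar>)" using h by auto
      show "AE x in M. (\<lambda>k. s k x) \<longlonglongrightarrow> indicator (V n) x * h x"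
      proof (rule AE_I2)
        fix x
        have "(\<lambda>k. (1 - (\<Prod>j<n. 1 - bump (c j) (r j) (real k) x)) * h x) \<longlonglongrightarrow>
            (1 - (\<Prod>j<n. 1 - indicator (B j) x)) * h x"
          unfolding Bj by (intro tendsto_intros bump_lim r)
        then show "(\<lambda>k. s k x) \<longlonglongrightarrow> indicator (V n) x * h x"
          unfolding s_def V_def prod_indicator by simp
      qed
      show "AE x in M. norm (s k x) \<le> \<bar>h x\<bar>" for k
      proof (rule AE_I2)
        fix x
        have "0 \<le> (\<Prod>j<n. 1 - bump (c j) (r j) (real k) x) \<and> (\<Prod>j<n. 1 - bump (c j) (r j) (real k) x) \<le> 1"
          using bump_bounds[of "real k"] by (intro conjI prod_nonneg prod_le_1) auto
        then show "norm (s k x) \<le> \<bar>h x\<bar>" unfolding s_def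
          by (auto simp: abs_mult intro!: mult_left_le_one_le)
      qed
    qed
    then show ?thesis unfolding s0 using LIMSEQ_unique tendsto_const by blast
  qed
  have lim: "(\<lambda>n. \<integral>x. indicator (V n) x * h x \<partial>M) \<longlonglongrightarrow> (\<integral>x. indicator U x * h x \<partial>M)"
  proof (rule integral_dominated_convergence[where w="\<lambda>x. \<bar>h x\<bar>"])
    show "(\<lambda>x. indicator U x * h x) \<in> borel_measurable M"
      using U sets by (intro borel_measurable_times hm borel_measurable_indicator) auto
    show "(\<lambda>x. indicator (V n) x * h x) \<in> borel_measurable M" for n
      unfolding V_def using Bopen sets by (intro borel_measurable_times hm borel_measurable_indicator) auto
    show "integrable M (\<lambda>x. \<bar>h x\<bar>)" using h by auto
    show "AE x in M. (\<lambda>n. indicator (V n) x * h x) \<longlonglongrightarrow> indicator U x * h x"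
    proof (rule AE_I2)
      fix x
      have "eventually (\<lambda>n. indicator (V n) x * h x = indicator U x * h x) sequentially"
      proof (cases "x \<in> U")
        case True
        then obtain j where "x \<in> B j" using Ueq by auto
        then have "\<forall>n\<ge>Suc j. x \<in> V n" unfolding V_def by auto
        then show ?thesis using True unfolding eventually_sequentially
          by (intro exI[of _ "Suc j"]) auto
      next
        case False
        then have "x \<notin> V n" for n unfolding V_def using Ueq by auto
        then show ?thesis using False by auto
      qed
      then show "(\<lambda>n. indicator (V n) x * h x) \<longlonglongrightarrow> indicator U x * h x"
        by (rule tendsto_eventually)
    qed
    show "AE x in M. norm (indicator (V n) x * h x) \<le> \<bar>h x\<bar>" for n
      by (auto simp: indicator_def)
  qed
  then show ?thesis unfolding Vint using LIMSEQ_unique tendsto_const by metis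
qed

lemma C1b_dense:
  fixes M :: "'a::{real_inner, polish_space} measure"
  assumes fin: "finite_measure M" and sets: "sets M = sets borel" and h: "integrable M h"
    and z: "\<And>\<psi>. \<psi> \<in> C1b \<Longrightarrow> (\<integral>x. \<psi> x * h x \<partial>M) = 0"
  shows "AE x in M. h x = 0"
proof -
  have hm[measurable]: "h \<in> borel_measurable M" using h by auto
  define N1 where "N1 = density M (\<lambda>x. ennreal (h x))"
  define N2 where "N2 = density M (\<lambda>x. ennreal (- h x))"
  have e1: "emeasure N1 A = (\<integral>\<^sup>+x. ennreal (indicator A x * h x) \<partial>M)" if A: "A \<in> sets M" for A
    unfolding N1_def using A
    by (subst emeasure_density) (auto intro!: nn_integral_cong simp: indicator_def)
  have e2: "emeasure N2 A = (\<integral>\<^sup>+x. ennreal (- (indicator A x * h x)) \<partial>M)" if A: "A \<in> sets M" for A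
    unfolding N2_def using A
    by (subst emeasure_density) (auto intro!: nn_integral_cong simp: indicator_def)
  have f1: "emeasure N1 A \<noteq> \<infinity>" if A: "A \<in> sets M" for A
  proof -
    have "emeasure N1 A \<le> (\<integral>\<^sup>+x. ennreal (h x) \<partial>M)"
      unfolding e1[OF A] by (intro nn_integral_mono) (auto simp: indicator_def)
    then show ?thesis using integrableD(2)[OF h] by (auto simp: top_unique)
  qed
  have f2: "emeasure N2 A \<noteq> \<infinity>" if A: "A \<in> sets M" for A
  proof -
    have "emeasure N2 A \<le> (\<integral>\<^sup>+x. ennreal (- h x) \<partial>M)"
      unfolding e2[OF A] by (intro nn_integral_mono) (auto simp: indicator_def)
    then show ?thesis using integrableD(3)[OF h] by (auto simp: top_unique)
  qed
  have key: "(\<integral>x. indicator A x * h x \<partial>M) = enn2real (emeasure N1 A) - enn2real (emeasure N2 A)"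
    if A: "A \<in> sets M" for A
  proof -
    have int: "integrable M (\<lambda>x. indicator A x * h x)"
      using integrable_real_mult_indicator[OF A h] by (simp add: mult.commute)
    show ?thesis unfolding real_lebesgue_integral_def[OF int] e1[OF A] e2[OF A] ..
  qed
  have eqU: "emeasure N1 U = emeasure N2 U" if U: "U \<in> {S. open S}" for U
  proof -
    have UM: "U \<in> sets M" using U sets by auto
    have "enn2real (emeasure N1 U) = enn2real (emeasure N2 U)"
      using key[OF UM] open_integral_zero[OF fin sets h z] U by simp
    then have "ennreal (enn2real (emeasure N1 U)) = ennreal (enn2real (emeasure N2 U))" by simp
    then show ?thesis using f1[OF UM] f2[OF UM] by (simp add: ennreal_enn2real_if)
  qed
  have N: "N1 = N2"
  proof (rule measure_eqI_generator_eq[where E="{S. open S}" and \<Omega>=UNIV and A="\<lambda>i. UNIV"])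
    show "Int_stable {S. open S}" by (auto simp: Int_stable_def)
    show "sets N1 = sigma_sets UNIV {S. open S}" unfolding N1_def using sets by (simp add: sets_borel)
    show "sets N2 = sigma_sets UNIV {S. open S}" unfolding N2_def using sets by (simp add: sets_borel)
    show "emeasure N1 UNIV \<noteq> \<infinity>" for i :: nat
    proof -
      have "UNIV \<in> sets M" using sets by simp
      then show ?thesis using f1 by blast
    qed
  qed (use eqU in auto)
  have "set_lebesgue_integral M A h = 0" if A: "A \<in> sets M" for A
    unfolding set_lebesgue_integral_def using key[OF A] N by simp
  moreover have sf: "sigma_finite_measure M" using fin by (simp add: finite_measure_def)
  ultimately show ?thesis using sigma_finite_measure.density_zero[OF sf h] by blast
qed

lemma Lp_conv_0_iff: "Lp_conv M p F f \<longleftrightarrow> Lp_conv M p (\<lambda>n x. F n x - f x) (\<lambda>x. 0)"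
  by (simp add: Lp_conv_def)

lemma powr_add_le:
  fixes x y p :: real
  assumes "x \<ge> 0" "y \<ge> 0" "p > 0"
  shows "(x + y) powr p \<le> 2 powr p * (x powr p + y powr p)"
proof -
  have "(x + y) powr p \<le> (2 * max x y) powr p"
    using assms by (intro powr_mono2) auto
  also have "\<dots> = 2 powr p * max x y powr p" using assms by (simp add: powr_mult)
  also have "max x y powr p \<le> x powr p + y powr p" by (auto simp: max_def)
  then have "2 powr p * max x y powr p \<le> 2 powr p * (x powr p + y powr p)" by simp
  finally show ?thesis .
qed

lemma Lp_add:
  fixes A B :: "nat \<Rightarrow> 'a \<Rightarrow> 'b::{real_normed_vector, second_countable_topology}"
  assumes p: "p > 0"
    and [measurable]: "\<And>n. A n \<in> borel_measurable M" "\<And>n. B n \<in> borel_measurable M"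
    and a: "Lp_conv M p A (\<lambda>x. 0)" and b: "Lp_conv M p B (\<lambda>x. 0)"
  shows "Lp_conv M p (\<lambda>n x. A n x + B n x) (\<lambda>x. 0)"
proof -
  let ?IA = "\<lambda>n. \<integral>\<^sup>+ x. ennreal (norm (A n x) powr p) \<partial>M"
  let ?IB = "\<lambda>n. \<integral>\<^sup>+ x. ennreal (norm (B n x) powr p) \<partial>M"
  have le: "(\<integral>\<^sup>+ x. ennreal (norm (A n x + B n x) powr p) \<partial>M) \<le> ennreal (2 powr p) * (?IA n + ?IB n)" for n
  proof -
    have "(\<integral>\<^sup>+ x. ennreal (norm (A n x + B n x) powr p) \<partial>M)
        \<le> (\<integral>\<^sup>+ x. ennreal (2 powr p) * (ennreal (norm (A n x) powr p) + ennreal (norm (B n x) powr p)) \<partial>M)"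
    proof (intro nn_integral_mono)
      fix x
      have "norm (A n x + B n x) powr p \<le> (norm (A n x) + norm (B n x)) powr p"
        using p by (intro powr_mono2 norm_triangle_ineq) auto
      also have "\<dots> \<le> 2 powr p * (norm (A n x) powr p + norm (B n x) powr p)"
        using p by (intro powr_add_le) auto
      finally show "ennreal (norm (A n x + B n x) powr p)
          \<le> ennreal (2 powr p) * (ennreal (norm (A n x) powr p) + ennreal (norm (B n x) powr p))"
        by (simp add: ennreal_mult[symmetric] ennreal_plus[symmetric] del: ennreal_plus)
    qed
    also have "\<dots> = ennreal (2 powr p) * (?IA n + ?IB n)"
      by (simp add: nn_integral_cmult nn_integral_add)
    finally show ?thesis .
  qed
  have "(\<lambda>n. ennreal (2 powr p) * (?IA n + ?IB n)) \<longlonglongrightarrow> ennreal (2 powr p) * (0 + 0)"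
    using a b unfolding Lp_conv_def
    by (intro ennreal_tendsto_cmult tendsto_add) auto
  then have "(\<lambda>n. ennreal (2 powr p) * (?IA n + ?IB n)) \<longlonglongrightarrow> 0" by simp
  then show ?thesis unfolding Lp_conv_def
    by (rule tendsto_sandwich[rotated 2, OF tendsto_const]) (use le in auto)
qed

lemma Lp_scale:
  fixes H :: "nat \<Rightarrow> 'a \<Rightarrow> 'b::{real_normed_vector, second_countable_topology}"
  assumes p: "p > 0" and C: "C \<ge> 0"
    and [measurable]: "\<And>n. H n \<in> borel_measurable M"
    and h: "Lp_conv M p H (\<lambda>x. 0)"
    and c: "\<And>n. AE x in M. \<bar>c n x\<bar> \<le> C"
  shows "Lp_conv M p (\<lambda>n x. c n x *\<^sub>R H n x) (\<lambda>x. 0)"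
proof -
  let ?I = "\<lambda>n. \<integral>\<^sup>+ x. ennreal (norm (H n x) powr p) \<partial>M"
  have le: "(\<integral>\<^sup>+ x. ennreal (norm (c n x *\<^sub>R H n x) powr p) \<partial>M) \<le> ennreal (C powr p) * ?I n" for n
  proof -
    have "(\<integral>\<^sup>+ x. ennreal (norm (c n x *\<^sub>R H n x) powr p) \<partial>M)
        \<le> (\<integral>\<^sup>+ x. ennreal (C powr p) * ennreal (norm (H n x) powr p) \<partial>M)"
    proof (intro nn_integral_mono_AE)
      show "AE x in M. ennreal (norm (c n x *\<^sub>R H n x) powr p) \<le> ennreal (C powr p) * ennreal (norm (H n x) powr p)"
        using c[of n]
      proof eventually_elim
        case (elim x)
        have "norm (c n x *\<^sub>R H n x) powr p = \<bar>c n x\<bar> powr p * norm (H n x) powr p"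
          by (simp add: powr_mult)
        also have "\<dots> \<le> C powr p * norm (H n x) powr p"
          using elim p by (intro mult_right_mono powr_mono2) auto
        finally show ?case by (simp add: ennreal_mult[symmetric])
      qed
    qed
    also have "\<dots> = ennreal (C powr p) * ?I n" by (simp add: nn_integral_cmult)
    finally show ?thesis .
  qed
  have "(\<lambda>n. ennreal (C powr p) * ?I n) \<longlonglongrightarrow> ennreal (C powr p) * 0"
    using h unfolding Lp_conv_def by (intro ennreal_tendsto_cmult) auto
  then have "(\<lambda>n. ennreal (C powr p) * ?I n) \<longlonglongrightarrow> 0" by simp
  then show ?thesis unfolding Lp_conv_def
    by (rule tendsto_sandwich[rotated 2, OF tendsto_const]) (use le in auto)
qed

lemma Lp_dom:
  fixes H :: "nat \<Rightarrow> 'a \<Rightarrow> 'b::{real_normed_vector, second_countable_topology}"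
  assumes p: "p > 0"
    and [measurable]: "\<And>n. H n \<in> borel_measurable M" "w \<in> borel_measurable M"
    and bd: "\<And>n. AE x in M. norm (H n x) \<le> w x"
    and wi: "integrable M (\<lambda>x. w x powr p)"
    and lim: "AE x in M. (\<lambda>n. H n x) \<longlonglongrightarrow> 0"
  shows "Lp_conv M p H (\<lambda>x. 0)"
proof -
  have "(\<lambda>i. (\<integral>\<^sup>+x. norm (0 - norm (H i x) powr p) \<partial>M)) \<longlonglongrightarrow> 0"
  proof (rule nn_integral_dominated_convergence_norm[where w="\<lambda>x. w x powr p"])
    show "AE x in M. norm (norm (H j x) powr p) \<le> w x powr p" for j
      using bd[of j] by eventually_elim (use p in \<open>auto intro: powr_mono2\<close>)
    show "(\<integral>\<^sup>+x. ennreal (w x powr p) \<partial>M) < \<infinity>"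
      using integrableD(2)[OF wi] by (simp add: less_top)
    show "AE x in M. (\<lambda>i. norm (H i x) powr p) \<longlonglongrightarrow> 0"
      using lim
    proof eventually_elim
      case (elim x)
      then have "(\<lambda>i. norm (H i x)) \<longlonglongrightarrow> 0" using tendsto_norm_zero by blast
      then show ?case using p by (intro tendsto_zero_powrI) auto
    qed
  qed auto
  then show ?thesis unfolding Lp_conv_def by simp
qed

lemma Lp_subseq:
  assumes "Lp_conv M p F f" "strict_mono r"
  shows "Lp_conv M p (\<lambda>n. F (r n)) f"
  using LIMSEQ_subseq_LIMSEQ[OF assms[unfolded Lp_conv_def]] unfolding Lp_conv_def by (simp add: comp_def)

lemma Lp_cong_AE:
  assumes "Lp_conv M p F f" "\<And>n. AE x in M. F n x - f x = F' n x - f' x"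
  shows "Lp_conv M p F' f'"
proof -
  have "(\<integral>\<^sup>+ x. ennreal (norm (F n x - f x) powr p) \<partial>M) = (\<integral>\<^sup>+ x. ennreal (norm (F' n x - f' x) powr p) \<partial>M)" for n
    using assms(2)[of n] by (intro nn_integral_cong_AE) auto
  then show ?thesis using assms(1) unfolding Lp_conv_def by simp
qed

lemma Lp_mono_AE:
  assumes "Lp_conv M p F f" "\<And>n. AE x in M. norm (F' n x - f' x) \<le> norm (F n x - f x)" "p > 0"
  shows "Lp_conv M p F' f'"
proof -
  have le: "(\<integral>\<^sup>+ x. ennreal (norm (F' n x - f' x) powr p) \<partial>M) \<le> (\<integral>\<^sup>+ x. ennreal (norm (F n x - f x) powr p) \<partial>M)" for n
    using assms(2)[of n] by (intro nn_integral_mono_AE) (auto elim!: eventually_mono intro: powr_mono2 simp: assms(3) less_imp_le)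
  show ?thesis using assms(1) unfolding Lp_conv_def
    by (rule tendsto_sandwich[rotated 2, OF tendsto_const]) (use le in auto)
qed

lemma Lp_subseq_AE:
  fixes F :: "nat \<Rightarrow> 'a \<Rightarrow> 'b::{real_normed_vector, second_countable_topology}"
  assumes p: "p > 0" and conv: "Lp_conv M p F f"
    and meas: "\<And>n. (\<lambda>x. F n x - f x) \<in> borel_measurable M"
  shows "\<exists>r. strict_mono r \<and> (AE x in M. (\<lambda>n. F (r n) x) \<longlonglongrightarrow> f x)"
proof -
  define d where "d n x = ennreal (norm (F n x - f x) powr p)" for n x
  define I where "I n = integral\<^sup>N M (d n)" for n
  have dm[measurable]: "d n \<in> borel_measurable M" for n unfolding d_def using meas[of n] by measurable
  have I0: "I \<longlonglongrightarrow> 0" using conv unfolding Lp_conv_def I_def d_def .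
  have ex: "\<exists>N. \<forall>n\<ge>N. I n < ennreal ((1/2) ^ k)" for k
  proof -
    have "eventually (\<lambda>n. I n < ennreal ((1/2) ^ k)) sequentially"
      by (rule order_tendstoD(2)[OF I0]) simp
    then show ?thesis unfolding eventually_sequentially .
  qed
  define N where "N k = (SOME N. \<forall>n\<ge>N. I n < ennreal ((1/2) ^ k))" for k
  have N: "\<forall>n\<ge>N k. I n < ennreal ((1/2) ^ k)" for k
    unfolding N_def using someI_ex[OF ex[of k]] .
  define r where "r k = k + (\<Sum>i\<le>k. N i)" for k
  have sm: "strict_mono r"
    by (rule strict_monoI_Suc) (simp add: r_def)
  have rN: "r k \<ge> N k" for k unfolding r_def
    using member_le_sum[of k "{..k}" N] by simp
  have Ir: "I (r k) \<le> ennreal ((1/2) ^ k)" for k using N[of k] rN[of k] by (auto intro: less_imp_le)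
  have "(\<integral>\<^sup>+ x. (\<Sum>k. d (r k) x) \<partial>M) = (\<Sum>k. I (r k))"
    unfolding I_def by (rule nn_integral_suminf) measurable
  also have "\<dots> \<le> (\<Sum>k. ennreal ((1/2) ^ k))"
    by (rule suminf_le[OF Ir summableI summableI])
  also have "\<dots> < \<infinity>"
  proof -
    have "(\<Sum>k. ennreal ((1/2) ^ k)) \<noteq> top"
      by (rule ennreal_suminf_neq_top) (auto intro: summable_geometric)
    then show ?thesis unfolding infinity_ennreal_def less_top[symmetric] .
  qed
  finally have fin0: "(\<integral>\<^sup>+ x. (\<Sum>k. d (r k) x) \<partial>M) < \<infinity>" .
  have fin: "(\<integral>\<^sup>+ x. (\<Sum>k. d (r k) x) \<partial>M) \<noteq> \<infinity>" using fin0 by (rule less_imp_neq)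
  have "AE x in M. (\<Sum>k. d (r k) x) \<noteq> \<infinity>"
    by (rule nn_integral_noteq_infinite[OF _ fin]) measurable
  then have "AE x in M. (\<lambda>n. F (r n) x) \<longlonglongrightarrow> f x"
  proof eventually_elim
    case (elim x)
    let ?a = "\<lambda>k. norm (F (r k) x - f x) powr p"
    have "(\<Sum>k. ennreal (?a k)) \<noteq> top" using elim by (simp only: d_def infinity_ennreal_def simp_thms)
    then have "summable ?a"
      by (intro summable_suminf_not_top) simp_all
    then have a0: "?a \<longlonglongrightarrow> 0" by (rule summable_LIMSEQ_zero)
    have lim: "(\<lambda>k. ?a k powr (1 / p)) \<longlonglongrightarrow> 0"
      using p by (intro tendsto_zero_powrI[OF a0 tendsto_const]) auto
    have e: "(\<lambda>k. ?a k powr (1 / p)) = (\<lambda>k. norm (F (r k) x - f x))"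
      by (rule ext) (use p in \<open>simp add: powr_powr\<close>)
    have "(\<lambda>k. norm (F (r k) x - f x)) \<longlonglongrightarrow> 0" using lim unfolding e .
    then have "(\<lambda>k. F (r k) x - f x) \<longlonglongrightarrow> 0" by (simp only: tendsto_norm_zero_iff)
    then show ?case by (rule LIM_zero_cancel)
  qed
  then show ?thesis using sm by blast
qed

lemma Lp_L1:
  fixes H :: "nat \<Rightarrow> 'a \<Rightarrow> 'b::{real_normed_vector, second_countable_topology}"
  assumes P: "prob_space M" and p: "p \<ge> 1"
    and [measurable]: "\<And>n. H n \<in> borel_measurable M"
    and conv: "Lp_conv M p H (\<lambda>x. 0)"
  shows "(\<lambda>n. \<integral>\<^sup>+ x. ennreal (norm (H n x)) \<partial>M) \<longlonglongrightarrow> 0"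
proof -
  define I where "I n = (\<integral>\<^sup>+ x. ennreal (norm (H n x) powr p) \<partial>M)" for n
  have I0: "I \<longlonglongrightarrow> 0" using conv unfolding Lp_conv_def I_def by simp
  define y where "y n = enn2real (I n)" for n
  have y0: "y \<longlonglongrightarrow> 0" unfolding y_def using tendsto_enn2real[of I 0] I0 by simp
  define \<delta> where "\<delta> n = y n powr (1 / p) + inverse (real (Suc n))" for n
  have y_nn: "y n \<ge> 0" for n by (simp add: y_def)
  have \<delta>pos: "\<delta> n > 0" for n unfolding \<delta>_def by (intro add_nonneg_pos) auto
  have \<delta>0: "\<delta> \<longlonglongrightarrow> 0"
  proof -
    have "(\<lambda>n. y n powr (1 / p)) \<longlonglongrightarrow> 0"
      using p y_nn by (intro tendsto_zero_powrI[OF y0 tendsto_const]) auto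
    from tendsto_add[OF this LIMSEQ_inverse_real_of_nat]
    show ?thesis unfolding \<delta>_def by simp
  qed
  have ev: "eventually (\<lambda>n. I n < \<infinity>) sequentially"
    by (rule order_tendstoD(2)[OF I0]) simp
  have pt: "t \<le> d + d powr (1 - p) * t powr p" if "t \<ge> 0" "d > 0" for t d :: real
  proof (cases "t \<le> d")
    case True
    then show ?thesis by (simp add: add_increasing2)
  next
    case False
    then have "t = t powr (1 - p) * t powr p" using that by (simp add: powr_add[symmetric])
    also have "\<dots> \<le> d powr (1 - p) * t powr p"
      using False that p by (intro mult_right_mono powr_mono2') auto
    finally show ?thesis using that by linarith
  qed
  have bound: "(\<integral>\<^sup>+ x. ennreal (norm (H n x)) \<partial>M) \<le> ennreal (2 * \<delta> n)" if fin: "I n < \<infinity>" for n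
  proof -
    interpret prob_space M by (rule P)
    have "(\<integral>\<^sup>+ x. ennreal (norm (H n x)) \<partial>M)
        \<le> (\<integral>\<^sup>+ x. ennreal (\<delta> n) + ennreal (\<delta> n powr (1 - p)) * ennreal (norm (H n x) powr p) \<partial>M)"
    proof (intro nn_integral_mono)
      fix x
      have "norm (H n x) \<le> \<delta> n + \<delta> n powr (1 - p) * norm (H n x) powr p"
        by (rule pt[OF norm_ge_zero \<delta>pos])
      then have "ennreal (norm (H n x)) \<le> ennreal (\<delta> n + \<delta> n powr (1 - p) * norm (H n x) powr p)"
        by (rule ennreal_leI)
      also have "\<dots> = ennreal (\<delta> n) + ennreal (\<delta> n powr (1 - p) * norm (H n x) powr p)"
        using \<delta>pos[of n] by (intro ennreal_plus) auto
      also have "ennreal (\<delta> n powr (1 - p) * norm (H n x) powr p) = ennreal (\<delta> n powr (1 - p)) * ennreal (norm (H n x) powr p)"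
        by (intro ennreal_mult) auto
      finally show "ennreal (norm (H n x)) \<le> ennreal (\<delta> n) + ennreal (\<delta> n powr (1 - p)) * ennreal (norm (H n x) powr p)" .
    qed
    also have "\<dots> = ennreal (\<delta> n) + ennreal (\<delta> n powr (1 - p)) * I n"
      unfolding I_def by (simp add: nn_integral_add nn_integral_cmult emeasure_space_1)
    also have "I n = ennreal (y n)" using fin unfolding y_def by simp
    also have "y n \<le> \<delta> n powr p"
    proof -
      have "y n = (y n powr (1 / p)) powr p" using p y_nn by (simp add: powr_powr)
      also have "\<dots> \<le> \<delta> n powr p" unfolding \<delta>_def using p y_nn by (intro powr_mono2) auto
      finally show ?thesis .
    qed
    then have "ennreal (\<delta> n) + ennreal (\<delta> n powr (1 - p)) * ennreal (y n) \<le>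
        ennreal (\<delta> n) + ennreal (\<delta> n powr (1 - p)) * ennreal (\<delta> n powr p)"
      by (intro add_left_mono mult_left_mono ennreal_leI) auto
    also have "\<dots> = ennreal (2 * \<delta> n)"
      using \<delta>pos[of n] by (simp add: ennreal_mult[symmetric] ennreal_plus[symmetric] powr_add[symmetric] del: ennreal_plus)
    finally show ?thesis .
  qed
  have "(\<lambda>n. ennreal (2 * \<delta> n)) \<longlonglongrightarrow> ennreal (2 * 0)"
    by (intro tendsto_ennrealI tendsto_mult tendsto_const \<delta>0)
  then have "(\<lambda>n. ennreal (2 * \<delta> n)) \<longlonglongrightarrow> 0" by simp
  then show ?thesis
    by (rule tendsto_sandwich[rotated 2, OF tendsto_const]) (use ev bound in \<open>auto elim: eventually_mono\<close>)
qed

lemma theta_meas: "b > 0 \<Longrightarrow> theta a b \<in> borel_measurable borel"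
  by (rule borel_measurable_continuous_onI)
    (meson DERIV_isCont continuous_at_imp_continuous_on theta_deriv)
lemma theta'_meas: "b > 0 \<Longrightarrow> theta' a b \<in> borel_measurable borel"
  by (rule borel_measurable_continuous_onI) (rule theta'_cont)

lemma grad_meas:
  fixes M :: "'a::{real_inner, polish_space} measure"
  assumes "sets M = sets borel" "f \<in> C1b"
  shows "(\<lambda>x. blinfun_apply R (grad f x)) \<in> borel_measurable M"
proof -
  have "continuous_on UNIV (\<lambda>x. blinfun_apply R (grad f x))"
    using C1bD(2)[OF assms(2)] by (intro continuous_intros)
  then show ?thesis
    by (subst measurable_cong_sets[OF assms(1) refl]) (rule borel_measurable_continuous_onI)
qed

lemma grad_bound:
  assumes "f \<in> C1b"
  shows "\<exists>B. \<forall>x. norm (blinfun_apply R (grad f x)) \<le> B"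
proof -
  obtain B where B: "\<And>x. norm (grad f x) \<le> B" using C1bD(4)[OF assms] by metis
  have "norm (blinfun_apply R (grad f x)) \<le> norm R * B" for x
    using norm_blinfun[of R "grad f x"] B[of x] by (meson mult_left_mono norm_ge_zero order_trans)
  then show ?thesis by blast
qed

lemma trunc:
  fixes M :: "'a::{real_inner, polish_space} measure"
  assumes sets: "sets M = sets borel" and p: "p > 0"
    and gr: "Mp_graph M R p \<phi> g" and a: "a > 0" and b: "b > 0"
    and bd: "AE x in M. \<bar>\<phi> x\<bar> \<le> a"
  shows "\<exists>G. (\<forall>n. G n \<in> C1b) \<and> (\<forall>n x. \<bar>G n x\<bar> \<le> a + b) \<and> Lp_conv M p G \<phi>
     \<and> Lp_conv M p (\<lambda>n x. blinfun_apply R (grad (G n) x)) g \<and> (AE x in M. (\<lambda>n. G n x) \<longlonglongrightarrow> \<phi> x)"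
proof -
  obtain F where F: "\<And>n. F n \<in> C1b" and Fc: "Lp_conv M p F \<phi>"
    and Fg: "Lp_conv M p (\<lambda>n x. blinfun_apply R (grad (F n) x)) g"
    and \<phi>L: "in_Lp M p \<phi>" and gL: "in_Lp M p g"
    using gr unfolding Mp_graph_def by blast
  have [measurable]: "\<phi> \<in> borel_measurable M" "g \<in> borel_measurable M" using \<phi>L gL by (auto simp: in_Lp_def)
  have [measurable]: "F n \<in> borel_measurable M" for n using C1b_meas[OF sets F] .
  have [measurable]: "(\<lambda>x. blinfun_apply R (grad (F n) x)) \<in> borel_measurable M" for n
    using grad_meas[OF sets F] .
  have [measurable]: "theta a b \<in> borel_measurable borel" "theta' a b \<in> borel_measurable borel"
    using theta_meas[OF b] theta'_meas[OF b] .
  have "\<exists>r. strict_mono r \<and> (AE x in M. (\<lambda>n. F (r n) x) \<longlonglongrightarrow> \<phi> x)"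
    by (rule Lp_subseq_AE[OF p Fc]) measurable
  then obtain r where r: "strict_mono r" and rAE: "AE x in M. (\<lambda>n. F (r n) x) \<longlonglongrightarrow> \<phi> x"
    by blast
  define G where "G n x = theta a b (F (r n) x)" for n x
  have th'b: "\<bar>theta' a b t\<bar> \<le> 1" for t using theta'_bound[OF a b, of t] by auto
  have GC: "G n \<in> C1b" and Gg: "grad (G n) = (\<lambda>x. theta' a b (F (r n) x) *\<^sub>R grad (F (r n)) x)" for n
    unfolding G_def[abs_def]
    using C1b_comp[OF F theta_deriv[OF b] theta'_cont[OF b] theta_bound[OF a b] th'b] by auto
  have RGg: "blinfun_apply R (grad (G n) x) = theta' a b (F (r n) x) *\<^sub>R blinfun_apply R (grad (F (r n)) x)" for n x
    unfolding Gg by (simp add: blinfun.scaleR_right)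
  have Gb: "\<bar>G n x\<bar> \<le> a + b" for n x unfolding G_def using theta_bound[OF a b] .
  have thc: "isCont (theta a b) t" for t using DERIV_isCont[OF theta_deriv[OF b]] .
  have th'c: "isCont (theta' a b) t" for t using theta'_cont[OF b] by (simp add: continuous_on_eq_continuous_at)
  have GAE: "AE x in M. (\<lambda>n. G n x) \<longlonglongrightarrow> \<phi> x"
    using rAE bd
  proof eventually_elim
    case (elim x)
    have "(\<lambda>n. theta a b (F (r n) x)) \<longlonglongrightarrow> theta a b (\<phi> x)"
      by (rule isCont_tendsto_compose[OF thc elim(1)])
    then show ?case unfolding G_def using theta_small[OF a b elim(2)] by simp
  qed
  have Gc: "Lp_conv M p G \<phi>"
  proof (rule Lp_mono_AE[OF Lp_subseq[OF Fc r] _ p])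
    fix n
    show "AE x in M. norm (G n x - \<phi> x) \<le> norm (F (r n) x - \<phi> x)"
      using bd
    proof eventually_elim
      case (elim x)
      then have "\<phi> x = theta a b (\<phi> x)" using theta_small[OF a b elim] by simp
      then show ?case unfolding G_def using theta_lipschitz[OF a b, of "F (r n) x" "\<phi> x"]
        by (metis real_norm_def)
    qed
  qed
  have Fg': "Lp_conv M p (\<lambda>n x. blinfun_apply R (grad (F (r n)) x) - g x) (\<lambda>x. 0)"
    using Lp_subseq[OF Fg r] unfolding Lp_conv_0_iff[of M p _ g] .
  have A: "Lp_conv M p (\<lambda>n x. theta' a b (F (r n) x) *\<^sub>R (blinfun_apply R (grad (F (r n)) x) - g x)) (\<lambda>x. 0)"
    by (rule Lp_scale[OF p _ _ Fg', where C=1]) (use th'b in auto)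
  have B: "Lp_conv M p (\<lambda>n x. (theta' a b (F (r n) x) - 1) *\<^sub>R g x) (\<lambda>x. 0)"
  proof (rule Lp_dom[OF p, where w="\<lambda>x. norm (g x)"])
    show "AE x in M. norm ((theta' a b (F (r n) x) - 1) *\<^sub>R g x) \<le> norm (g x)" for n
    proof (rule AE_I2)
      fix x
      have "\<bar>theta' a b (F (r n) x) - 1\<bar> \<le> 1" using theta'_bound[OF a b, of "F (r n) x"] by auto
      then show "norm ((theta' a b (F (r n) x) - 1) *\<^sub>R g x) \<le> norm (g x)"
        by (simp add: mult_left_le_one_le)
    qed
    show "integrable M (\<lambda>x. norm (g x) powr p)" using gL by (simp add: in_Lp_def)
    show "AE x in M. (\<lambda>n. (theta' a b (F (r n) x) - 1) *\<^sub>R g x) \<longlonglongrightarrow> 0"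
      using rAE bd
    proof eventually_elim
      case (elim x)
      have "(\<lambda>n. theta' a b (F (r n) x)) \<longlonglongrightarrow> theta' a b (\<phi> x)"
        by (rule isCont_tendsto_compose[OF th'c elim(1)])
      then have "(\<lambda>n. (theta' a b (F (r n) x) - 1) *\<^sub>R g x) \<longlonglongrightarrow> (theta' a b (\<phi> x) - 1) *\<^sub>R g x"
        by (intro tendsto_intros)
      then show ?case using theta_small[OF a b elim(2)] by simp
    qed
  qed measurable
  have "Lp_conv M p (\<lambda>n x. theta' a b (F (r n) x) *\<^sub>R (blinfun_apply R (grad (F (r n)) x) - g x)
      + (theta' a b (F (r n) x) - 1) *\<^sub>R g x) (\<lambda>x. 0)"
    by (rule Lp_add[OF p _ _ A B]) measurable
  then have RG: "Lp_conv M p (\<lambda>n x. blinfun_apply R (grad (G n) x)) g"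
    unfolding Lp_conv_0_iff[of M p _ g]
    by (rule Lp_cong_AE) (auto simp: RGg algebra_simps)
  show ?thesis using GC Gb Gc RG GAE by blast
qed

lemma le_one_plus_powr: "t \<ge> 0 \<Longrightarrow> 1 \<le> q \<Longrightarrow> t \<le> 1 + t powr q" for t q :: real
proof -
  assume t: "t \<ge> 0" and q: "1 \<le> q"
  show ?thesis
  proof (cases "t \<le> 1")
    case True then show ?thesis using powr_ge_zero[of t q] by linarith
  next
    case False
    then have "t powr 1 \<le> t powr q" using q by (intro powr_mono) auto
    then show ?thesis using False by simp
  qed
qed

lemma Lp_integrable_norm:
  assumes fm: "finite_measure M" and q: "1 \<le> q" and L: "in_Lp M q f"
  shows "integrable M (\<lambda>x. norm (f x))"
proof -
  interpret finite_measure M by (rule fm)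
  have [measurable]: "f \<in> borel_measurable M" using L by (simp add: in_Lp_def)
  have "integrable M (\<lambda>x. 1 + norm (f x) powr q)"
    using L by (intro Bochner_Integration.integrable_add integrable_const) (simp_all add: in_Lp_def)
  then show ?thesis
    by (rule Bochner_Integration.integrable_bound) (auto intro!: AE_I2 le_one_plus_powr q)
qed

lemma closab_core:
  fixes M :: "'a::{real_inner, polish_space} measure" and R :: "'a \<Rightarrow>\<^sub>L 'a"
  assumes P: "prob_space M" and sets: "sets M = sets borel"
    and standing: "\<forall>z. \<exists>v. (\<forall>r>1. in_Lp M r v) \<and>
        (\<forall>\<phi>\<in>C1b. (\<integral>x. blinfun_apply R (grad \<phi> x) \<bullet> z \<partial>M) = (\<integral>x. v x * \<phi> x \<partial>M))"
    and p: "1 < p"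
    and \<Phi>: "\<And>n. \<Phi> n \<in> C1b" and K: "\<And>n x. \<bar>\<Phi> n x\<bar> \<le> K"
    and \<Phi>0: "AE x in M. (\<lambda>n. \<Phi> n x) \<longlonglongrightarrow> 0"
    and conv: "Lp_conv M p (\<lambda>n x. blinfun_apply R (grad (\<Phi> n) x)) g"
    and gL: "in_Lp M p g"
  shows "AE x in M. g x = 0"
proof -
  interpret prob_space M by (rule P)
  have fm: "finite_measure M" using P by (simp add: prob_space_def)
  have [measurable]: "g \<in> borel_measurable M" using gL by (simp add: in_Lp_def)
  have [measurable]: "\<Phi> n \<in> borel_measurable M" for n using C1b_meas[OF sets \<Phi>] .
  have [measurable]: "(\<lambda>x. blinfun_apply R (grad (\<Phi> n) x)) \<in> borel_measurable M" for n
    using grad_meas[OF sets \<Phi>] .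
  have gint: "integrable M (\<lambda>x. norm (g x))" using Lp_integrable_norm[OF fm _ gL] p by simp
  have K0: "K \<ge> 0" using K[of 0 undefined] by simp
  have D0: "(\<lambda>n. \<integral>\<^sup>+ x. ennreal (norm (blinfun_apply R (grad (\<Phi> n) x) - g x)) \<partial>M) \<longlonglongrightarrow> 0"
    by (rule Lp_L1[OF P _ _ conv[unfolded Lp_conv_0_iff[of M p _ g]]]) (use p in auto)
  have hz: "AE x in M. g x \<bullet> z = 0" for z
  proof -
    obtain v where vL: "\<And>r. r > 1 \<Longrightarrow> in_Lp M r v"
      and vst: "\<And>\<phi>. \<phi> \<in> C1b \<Longrightarrow> (\<integral>x. blinfun_apply R (grad \<phi> x) \<bullet> z \<partial>M) = (\<integral>x. v x * \<phi> x \<partial>M)"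
      using standing by metis
    have vL2: "in_Lp M 2 v" using vL by simp
    have [measurable]: "v \<in> borel_measurable M" using vL2 by (simp add: in_Lp_def)
    have vint: "integrable M (\<lambda>x. norm (v x))" using Lp_integrable_norm[OF fm _ vL2] by simp
    define h where "h x = g x \<bullet> z" for x
    have [measurable]: "h \<in> borel_measurable M" unfolding h_def by measurable
    have hint: "integrable M h"
    proof (rule Bochner_Integration.integrable_bound[where f="\<lambda>x. norm (g x) * norm z"])
      show "integrable M (\<lambda>x. norm (g x) * norm z)" using gint by (rule integrable_mult_left)
      show "AE x in M. norm (h x) \<le> norm (norm (g x) * norm z)"
        by (rule AE_I2) (simp add: h_def Cauchy_Schwarz_ineq2)
    qed measurable
    have "\<integral>x. \<psi> x * h x \<partial>M = 0" if \<psi>: "\<psi> \<in> C1b" for \<psi>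
    proof -
      have [measurable]: "\<psi> \<in> borel_measurable M" using C1b_meas[OF sets \<psi>] .
      have [measurable]: "(\<lambda>x. blinfun_apply R (grad \<psi> x)) \<in> borel_measurable M"
        using grad_meas[OF sets \<psi>] .
      obtain B\<psi> where B\<psi>: "\<And>x. \<bar>\<psi> x\<bar> \<le> B\<psi>" using C1bD(3)[OF \<psi>] by metis
      obtain C\<psi> where C\<psi>: "\<And>x. norm (blinfun_apply R (grad \<psi> x)) \<le> C\<psi>" using grad_bound[OF \<psi>] by metis
      have B0: "B\<psi> \<ge> 0" using B\<psi>[of undefined] by simp
      have C0: "C\<psi> \<ge> 0" using C\<psi>[of undefined] norm_ge_zero order_trans by blast
      define a where "a n = (\<integral>x. \<psi> x * (blinfun_apply R (grad (\<Phi> n) x) \<bullet> z) \<partial>M)" for n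
      have int1: "integrable M (\<lambda>x. \<Phi> n x * (blinfun_apply R (grad \<psi> x) \<bullet> z))" for n
      proof (rule integrable_const_bound[where B="K * (C\<psi> * norm z)"])
        show "AE x in M. norm (\<Phi> n x * (blinfun_apply R (grad \<psi> x) \<bullet> z)) \<le> K * (C\<psi> * norm z)"
        proof (rule AE_I2)
          fix x
          have "\<bar>blinfun_apply R (grad \<psi> x) \<bullet> z\<bar> \<le> C\<psi> * norm z"
            using Cauchy_Schwarz_ineq2[of "blinfun_apply R (grad \<psi> x)" z] C\<psi>[of x]
            by (meson mult_right_mono norm_ge_zero order_trans)
          then show "norm (\<Phi> n x * (blinfun_apply R (grad \<psi> x) \<bullet> z)) \<le> K * (C\<psi> * norm z)"
            using K[of n x] by (simp add: abs_mult mult_mono')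
        qed
      qed measurable
      have int2: "integrable M (\<lambda>x. \<psi> x * (blinfun_apply R (grad (\<Phi> n) x) \<bullet> z))" for n
      proof -
        obtain C where C: "\<And>x. norm (blinfun_apply R (grad (\<Phi> n) x)) \<le> C" using grad_bound[OF \<Phi>] by metis
        show ?thesis
        proof (rule integrable_const_bound[where B="B\<psi> * (C * norm z)"])
          show "AE x in M. norm (\<psi> x * (blinfun_apply R (grad (\<Phi> n) x) \<bullet> z)) \<le> B\<psi> * (C * norm z)"
          proof (rule AE_I2)
            fix x
            have "\<bar>blinfun_apply R (grad (\<Phi> n) x) \<bullet> z\<bar> \<le> C * norm z"
              using Cauchy_Schwarz_ineq2[of "blinfun_apply R (grad (\<Phi> n) x)" z] C[of x]
              by (meson mult_right_mono norm_ge_zero order_trans)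
            then show "norm (\<psi> x * (blinfun_apply R (grad (\<Phi> n) x) \<bullet> z)) \<le> B\<psi> * (C * norm z)"
              using B\<psi>[of x] by (simp add: abs_mult mult_mono')
          qed
        qed measurable
      qed
      have eq: "a n = (\<integral>x. v x * (\<Phi> n x * \<psi> x) \<partial>M) - (\<integral>x. \<Phi> n x * (blinfun_apply R (grad \<psi> x) \<bullet> z) \<partial>M)" for n
      proof -
        have pC: "(\<lambda>x. \<Phi> n x * \<psi> x) \<in> C1b" using C1b_mult(1)[OF \<Phi> \<psi>] .
        have gp: "grad (\<lambda>x. \<Phi> n x * \<psi> x) = (\<lambda>x. \<Phi> n x *\<^sub>R grad \<psi> x + \<psi> x *\<^sub>R grad (\<Phi> n) x)"
          using C1b_mult(2)[OF \<Phi> \<psi>] .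
        have "(\<integral>x. v x * (\<Phi> n x * \<psi> x) \<partial>M) = (\<integral>x. blinfun_apply R (grad (\<lambda>x. \<Phi> n x * \<psi> x) x) \<bullet> z \<partial>M)"
          using vst[OF pC] by simp
        also have "\<dots> = (\<integral>x. \<Phi> n x * (blinfun_apply R (grad \<psi> x) \<bullet> z) + \<psi> x * (blinfun_apply R (grad (\<Phi> n) x) \<bullet> z) \<partial>M)"
          unfolding gp by (simp add: blinfun.add_right blinfun.scaleR_right inner_add_left)
        also have "\<dots> = (\<integral>x. \<Phi> n x * (blinfun_apply R (grad \<psi> x) \<bullet> z) \<partial>M) + a n"
          unfolding a_def by (rule Bochner_Integration.integral_add[OF int1 int2])
        finally show ?thesis by simp
      qed
      have l1: "(\<lambda>n. \<integral>x. v x * (\<Phi> n x * \<psi> x) \<partial>M) \<longlonglongrightarrow> (\<integral>x. 0 \<partial>M)"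
      proof (rule integral_dominated_convergence[where w="\<lambda>x. norm (v x) * (K * B\<psi>)"])
        show "integrable M (\<lambda>x. norm (v x) * (K * B\<psi>))" using vint by (rule integrable_mult_left)
        show "AE x in M. (\<lambda>n. v x * (\<Phi> n x * \<psi> x)) \<longlonglongrightarrow> 0"
          using \<Phi>0 by eventually_elim (rule tendsto_mult_right_zero[OF tendsto_mult_left_zero])
        show "AE x in M. norm (v x * (\<Phi> n x * \<psi> x)) \<le> norm (v x) * (K * B\<psi>)" for n
          by (rule AE_I2) (use K B\<psi> K0 B0 in \<open>auto simp: abs_mult intro!: mult_left_mono mult_mono\<close>)
      qed measurable
      have l2: "(\<lambda>n. \<integral>x. \<Phi> n x * (blinfun_apply R (grad \<psi> x) \<bullet> z) \<partial>M) \<longlonglongrightarrow> (\<integral>x. 0 \<partial>M)"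
      proof (rule integral_dominated_convergence[where w="\<lambda>x. K * (C\<psi> * norm z)"])
        show "integrable M (\<lambda>x. K * (C\<psi> * norm z))" by simp
        show "AE x in M. (\<lambda>n. \<Phi> n x * (blinfun_apply R (grad \<psi> x) \<bullet> z)) \<longlonglongrightarrow> 0"
          using \<Phi>0 by eventually_elim (auto intro!: tendsto_mult_left_zero)
        show "AE x in M. norm (\<Phi> n x * (blinfun_apply R (grad \<psi> x) \<bullet> z)) \<le> K * (C\<psi> * norm z)" for n
        proof (rule AE_I2)
          fix x
          have "\<bar>blinfun_apply R (grad \<psi> x) \<bullet> z\<bar> \<le> C\<psi> * norm z"
            using Cauchy_Schwarz_ineq2[of "blinfun_apply R (grad \<psi> x)" z] C\<psi>[of x]
            by (meson mult_right_mono norm_ge_zero order_trans)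
          then show "norm (\<Phi> n x * (blinfun_apply R (grad \<psi> x) \<bullet> z)) \<le> K * (C\<psi> * norm z)"
            using K[of n x] by (simp add: abs_mult mult_mono')
        qed
      qed measurable
      have a0: "a \<longlonglongrightarrow> 0" unfolding eq using tendsto_diff[OF l1 l2] by simp
      have ai: "integrable M (\<lambda>x. \<psi> x * h x)"
        by (rule Bochner_Integration.integrable_bound[where f="\<lambda>x. B\<psi> * h x"])
          (use hint B\<psi> B0 in \<open>auto intro!: AE_I2 mult_right_mono simp: abs_mult\<close>)
      have "(\<lambda>n. ennreal (norm (a n - (\<integral>x. \<psi> x * h x \<partial>M)))) \<longlonglongrightarrow> 0"
      proof (rule tendsto_sandwich[rotated 2, OF tendsto_const])
        have "(\<lambda>n. ennreal (B\<psi> * norm z) * (\<integral>\<^sup>+ x. ennreal (norm (blinfun_apply R (grad (\<Phi> n) x) - g x)) \<partial>M))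
            \<longlonglongrightarrow> ennreal (B\<psi> * norm z) * 0"
          by (rule ennreal_tendsto_cmult[OF _ D0]) simp
        then show "(\<lambda>n. ennreal (B\<psi> * norm z) * (\<integral>\<^sup>+ x. ennreal (norm (blinfun_apply R (grad (\<Phi> n) x) - g x)) \<partial>M))
            \<longlonglongrightarrow> 0" by simp
        show "\<forall>\<^sub>F n in sequentially. ennreal (norm (a n - (\<integral>x. \<psi> x * h x \<partial>M)))
            \<le> ennreal (B\<psi> * norm z) * (\<integral>\<^sup>+ x. ennreal (norm (blinfun_apply R (grad (\<Phi> n) x) - g x)) \<partial>M)"
        proof (rule always_eventually, rule allI)
          fix n
          have "a n - (\<integral>x. \<psi> x * h x \<partial>M) = (\<integral>x. \<psi> x * ((blinfun_apply R (grad (\<Phi> n) x) - g x) \<bullet> z) \<partial>M)"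
            unfolding a_def h_def[abs_def] using int2[of n] ai[unfolded h_def]
            by (subst Bochner_Integration.integral_diff[symmetric]) (auto simp: inner_diff_left algebra_simps)
          moreover have "integrable M (\<lambda>x. \<psi> x * ((blinfun_apply R (grad (\<Phi> n) x) - g x) \<bullet> z))"
            using Bochner_Integration.integrable_diff[OF int2[of n] ai] unfolding h_def
            by (simp add: inner_diff_left algebra_simps)
          ultimately have "ennreal (norm (a n - (\<integral>x. \<psi> x * h x \<partial>M)))
              \<le> (\<integral>\<^sup>+ x. ennreal (norm (\<psi> x * ((blinfun_apply R (grad (\<Phi> n) x) - g x) \<bullet> z))) \<partial>M)"
            using integral_norm_bound_ennreal by metis
          also have "\<dots> \<le> (\<integral>\<^sup>+ x. ennreal (B\<psi> * norm z) * ennreal (norm (blinfun_apply R (grad (\<Phi> n) x) - g x)) \<partial>M)"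
          proof (intro nn_integral_mono)
            fix x
            have "norm (\<psi> x * ((blinfun_apply R (grad (\<Phi> n) x) - g x) \<bullet> z))
                \<le> B\<psi> * (norm (blinfun_apply R (grad (\<Phi> n) x) - g x) * norm z)"
              using B\<psi>[of x] Cauchy_Schwarz_ineq2[of "blinfun_apply R (grad (\<Phi> n) x) - g x" z]
              by (simp add: abs_mult mult_mono')
            then show "ennreal (norm (\<psi> x * ((blinfun_apply R (grad (\<Phi> n) x) - g x) \<bullet> z)))
                \<le> ennreal (B\<psi> * norm z) * ennreal (norm (blinfun_apply R (grad (\<Phi> n) x) - g x))"
              using B0 by (simp add: ennreal_mult[symmetric] mult_ac ennreal_leI)
          qed
          also have "\<dots> = ennreal (B\<psi> * norm z) * (\<integral>\<^sup>+ x. ennreal (norm (blinfun_apply R (grad (\<Phi> n) x) - g x)) \<partial>M)"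
            by (rule nn_integral_cmult) measurable
          finally show "ennreal (norm (a n - (\<integral>x. \<psi> x * h x \<partial>M)))
            \<le> ennreal (B\<psi> * norm z) * (\<integral>\<^sup>+ x. ennreal (norm (blinfun_apply R (grad (\<Phi> n) x) - g x)) \<partial>M)" .
        qed
      qed simp
      then have "(\<lambda>n. norm (a n - (\<integral>x. \<psi> x * h x \<partial>M))) \<longlonglongrightarrow> 0"
        using tendsto_ennreal_iff[where f="\<lambda>n. norm (a n - (\<integral>x. \<psi> x * h x \<partial>M))" and x=0 and F=sequentially] by simp
      then have "(\<lambda>n. a n - (\<integral>x. \<psi> x * h x \<partial>M)) \<longlonglongrightarrow> 0"
        by (simp only: tendsto_norm_zero_iff)
      then have "a \<longlonglongrightarrow> (\<integral>x. \<psi> x * h x \<partial>M)"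
        by (rule LIM_zero_cancel)
      then show ?thesis using a0 LIMSEQ_unique by blast
    qed
    then have "AE x in M. h x = 0" using C1b_dense[OF fm sets hint] by blast
    then show ?thesis unfolding h_def .
  qed
  obtain D :: "'a set" where D: "countable D" "\<And>X. open X \<Longrightarrow> X \<noteq> {} \<Longrightarrow> \<exists>d\<in>D. d \<in> X"
    using countable_dense_exists by blast
  have "AE x in M. \<forall>z\<in>D. g x \<bullet> z = 0"
    by (rule AE_ball_countable'[OF _ D(1)]) (rule hz)
  then show ?thesis
  proof eventually_elim
    case (elim x)
    show ?case
    proof (rule ccontr)
      assume ne: "g x \<noteq> 0"
      then obtain d where d: "d \<in> D" "d \<in> ball (g x) (norm (g x))"
        using D(2)[of "ball (g x) (norm (g x))"] by auto
      have "norm (g x - d)^2 = norm (g x)^2 + norm d^2"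
        using elim d(1) by (simp add: power2_norm_eq_inner inner_diff_left inner_diff_right inner_commute)
      then have "norm (g x)^2 \<le> norm (g x - d)^2" by simp
      then have "norm (g x) \<le> norm (g x - d)"
        by (rule power2_le_imp_le) simp
      moreover have "norm (g x - d) < norm (g x)" using d(2) by (simp add: dist_norm)
      ultimately show False by simp
    qed
  qed
qed

lemma in_Lp_add:
  fixes f g :: "'a \<Rightarrow> 'b::{real_normed_vector, second_countable_topology}"
  assumes p: "p > 0" and f: "in_Lp M p f" and g: "in_Lp M p g"
  shows "in_Lp M p (\<lambda>x. f x + g x)"
proof -
  have [measurable]: "f \<in> borel_measurable M" "g \<in> borel_measurable M" using f g by (auto simp: in_Lp_def)
  have i: "integrable M (\<lambda>x. 2 powr p * (norm (f x) powr p + norm (g x) powr p))"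
    using f g by (intro integrable_mult_right Bochner_Integration.integrable_add) (auto simp: in_Lp_def)
  have "integrable M (\<lambda>x. norm (f x + g x) powr p)"
  proof (rule Bochner_Integration.integrable_bound[OF i])
    show "AE x in M. norm (norm (f x + g x) powr p) \<le> norm (2 powr p * (norm (f x) powr p + norm (g x) powr p))"
    proof (rule AE_I2)
      fix x
      have "norm (f x + g x) powr p \<le> (norm (f x) + norm (g x)) powr p"
        using p by (intro powr_mono2 norm_triangle_ineq) auto
      also have "\<dots> \<le> 2 powr p * (norm (f x) powr p + norm (g x) powr p)"
        using p by (intro powr_add_le) auto
      finally show "norm (norm (f x + g x) powr p) \<le> norm (2 powr p * (norm (f x) powr p + norm (g x) powr p))"
        by simp
    qed
  qed measurable
  then show ?thesis unfolding in_Lp_def by simp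
qed

lemma in_Lp_scale:
  fixes f :: "'a \<Rightarrow> 'b::{real_normed_vector, second_countable_topology}"
  assumes p: "p > 0" and f: "in_Lp M p f" and c[measurable]: "c \<in> borel_measurable M"
    and cb: "AE x in M. \<bar>c x\<bar> \<le> C"
  shows "in_Lp M p (\<lambda>x. c x *\<^sub>R f x)"
proof -
  have [measurable]: "f \<in> borel_measurable M" using f by (auto simp: in_Lp_def)
  have i: "integrable M (\<lambda>x. \<bar>C\<bar> powr p * norm (f x) powr p)"
    using f by (intro integrable_mult_right) (auto simp: in_Lp_def)
  have "integrable M (\<lambda>x. norm (c x *\<^sub>R f x) powr p)"
  proof (rule Bochner_Integration.integrable_bound[OF i])
    show "AE x in M. norm (norm (c x *\<^sub>R f x) powr p) \<le> norm (\<bar>C\<bar> powr p * norm (f x) powr p)"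
      using cb
    proof eventually_elim
      case (elim x)
      have "norm (c x *\<^sub>R f x) powr p = \<bar>c x\<bar> powr p * norm (f x) powr p" by (simp add: powr_mult)
      also have "\<dots> \<le> \<bar>C\<bar> powr p * norm (f x) powr p"
        using elim p by (intro mult_right_mono powr_mono2) auto
      finally show ?case by simp
    qed
  qed measurable
  then show ?thesis unfolding in_Lp_def by simp
qed

lemma in_Lp_bounded:
  fixes f :: "'a \<Rightarrow> real"
  assumes fm: "finite_measure M" and f[measurable]: "f \<in> borel_measurable M"
    and b: "AE x in M. \<bar>f x\<bar> \<le> C" and p: "p > 0"
  shows "in_Lp M p f"
proof -
  interpret finite_measure M by (rule fm)
  have "integrable M (\<lambda>x. norm (f x) powr p)"
  proof (rule integrable_const_bound[where B="\<bar>C\<bar> powr p"])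
    show "AE x in M. norm (norm (f x) powr p) \<le> \<bar>C\<bar> powr p"
      using b by eventually_elim (use p in \<open>auto intro!: powr_mono2\<close>)
  qed measurable
  then show ?thesis unfolding in_Lp_def by simp
qed

lemma Lp_prod:
  fixes V :: "nat \<Rightarrow> 'a \<Rightarrow> 'b::{real_normed_vector, second_countable_topology}"
  assumes p: "p > 0"
    and [measurable]: "\<And>n. U n \<in> borel_measurable M" "u \<in> borel_measurable M"
      "\<And>n. V n \<in> borel_measurable M" "v \<in> borel_measurable M"
    and Ub: "\<And>n x. \<bar>U n x\<bar> \<le> C" and ub: "AE x in M. \<bar>u x\<bar> \<le> C"
    and Uu: "AE x in M. (\<lambda>n. U n x) \<longlonglongrightarrow> u x"
    and Vv: "Lp_conv M p V v" and vi: "integrable M (\<lambda>x. norm (v x) powr p)"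
  shows "Lp_conv M p (\<lambda>n x. U n x *\<^sub>R V n x) (\<lambda>x. u x *\<^sub>R v x)"
proof -
  have C0: "C \<ge> 0" using Ub[of 0 undefined] by simp
  have T1: "Lp_conv M p (\<lambda>n x. U n x *\<^sub>R (V n x - v x)) (\<lambda>x. 0)"
    by (rule Lp_scale[OF p C0 _ Vv[unfolded Lp_conv_0_iff[of M p V v]]]) (use Ub in auto)
  have T2: "Lp_conv M p (\<lambda>n x. (U n x - u x) *\<^sub>R v x) (\<lambda>x. 0)"
  proof (rule Lp_dom[OF p, where w="\<lambda>x. (2 * C) * norm (v x)"])
    show "AE x in M. norm ((U n x - u x) *\<^sub>R v x) \<le> 2 * C * norm (v x)" for n
      using ub
    proof eventually_elim
      case (elim x)
      have "\<bar>U n x - u x\<bar> \<le> 2 * C" using Ub[of n x] elim by linarith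
      then show ?case by (simp add: mult_right_mono)
    qed
    show "integrable M (\<lambda>x. (2 * C * norm (v x)) powr p)"
      using vi C0 by (simp add: powr_mult)
    show "AE x in M. (\<lambda>n. (U n x - u x) *\<^sub>R v x) \<longlonglongrightarrow> 0"
      using Uu
    proof eventually_elim
      case (elim x)
      have "(\<lambda>n. (U n x - u x) *\<^sub>R v x) \<longlonglongrightarrow> (u x - u x) *\<^sub>R v x"
        by (intro tendsto_intros elim)
      then show ?case by simp
    qed
  qed measurable
  have "Lp_conv M p (\<lambda>n x. U n x *\<^sub>R (V n x - v x) + (U n x - u x) *\<^sub>R v x) (\<lambda>x. 0)"
    by (rule Lp_add[OF p _ _ T1 T2]) measurable
  then show ?thesis unfolding Lp_conv_0_iff[of M p _ "\<lambda>x. u x *\<^sub>R v x"]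
    by (rule Lp_cong_AE) (auto simp: algebra_simps)
qed

lemma closab:
  fixes M :: "'a::{real_inner, polish_space} measure" and R :: "'a \<Rightarrow>\<^sub>L 'a"
  assumes P: "prob_space M" and sets: "sets M = sets borel"
    and standing: "\<forall>z. \<exists>v. (\<forall>r>1. in_Lp M r v) \<and>
        (\<forall>\<phi>\<in>C1b. (\<integral>x. blinfun_apply R (grad \<phi> x) \<bullet> z \<partial>M) = (\<integral>x. v x * \<phi> x \<partial>M))"
    and p: "1 < p"
    and g1: "Mp_graph M R p \<phi> g1" and g2: "Mp_graph M R p \<phi> g2"
    and a: "a > 0" and bd: "AE x in M. \<bar>\<phi> x\<bar> \<le> a"
  shows "AE x in M. g1 x = g2 x"
proof -
  have p0: "p > 0" using p by simp
  have g1L: "in_Lp M p g1" and g2L: "in_Lp M p g2" using g1 g2 by (auto simp: Mp_graph_def)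
  have [measurable]: "g1 \<in> borel_measurable M" "g2 \<in> borel_measurable M" using g1L g2L by (auto simp: in_Lp_def)
  obtain G1 where G1: "\<And>n. G1 n \<in> C1b" "\<And>n x. \<bar>G1 n x\<bar> \<le> a + 1"
    "Lp_conv M p (\<lambda>n x. blinfun_apply R (grad (G1 n) x)) g1" "AE x in M. (\<lambda>n. G1 n x) \<longlonglongrightarrow> \<phi> x"
    using trunc[OF sets p0 g1 a zero_less_one bd] by blast
  obtain G2 where G2: "\<And>n. G2 n \<in> C1b" "\<And>n x. \<bar>G2 n x\<bar> \<le> a + 1"
    "Lp_conv M p (\<lambda>n x. blinfun_apply R (grad (G2 n) x)) g2" "AE x in M. (\<lambda>n. G2 n x) \<longlonglongrightarrow> \<phi> x"
    using trunc[OF sets p0 g2 a zero_less_one bd] by blast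
  have [measurable]: "(\<lambda>x. blinfun_apply R (grad (G1 n) x)) \<in> borel_measurable M" for n
    using grad_meas[OF sets G1(1)] .
  have [measurable]: "(\<lambda>x. blinfun_apply R (grad (G2 n) x)) \<in> borel_measurable M" for n
    using grad_meas[OF sets G2(1)] .
  define \<Phi> where "\<Phi> n x = G1 n x - G2 n x" for n x
  have \<Phi>C: "\<Phi> n \<in> C1b" for n unfolding \<Phi>_def[abs_def] using C1b_diff(1)[OF G1(1) G2(1)] .
  have \<Phi>g: "blinfun_apply R (grad (\<Phi> n) x) = blinfun_apply R (grad (G1 n) x) - blinfun_apply R (grad (G2 n) x)" for n x
    unfolding \<Phi>_def[abs_def] C1b_diff(2)[OF G1(1) G2(1)] by (simp add: blinfun.diff_right)
  have \<Phi>b: "\<bar>\<Phi> n x\<bar> \<le> 2 * (a + 1)" for n x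
  proof -
    have "\<bar>\<Phi> n x\<bar> \<le> \<bar>G1 n x\<bar> + \<bar>G2 n x\<bar>" unfolding \<Phi>_def by (rule abs_triangle_ineq4)
    also have "\<dots> \<le> (a + 1) + (a + 1)" by (rule add_mono[OF G1(2) G2(2)])
    also have "\<dots> = 2 * (a + 1)" by (rule mult_2[symmetric])
    finally show ?thesis .
  qed
  have \<Phi>0: "AE x in M. (\<lambda>n. \<Phi> n x) \<longlonglongrightarrow> 0"
    using G1(4) G2(4)
  proof eventually_elim
    case (elim x)
    show ?case unfolding \<Phi>_def using tendsto_diff[OF elim] by simp
  qed
  have A: "Lp_conv M p (\<lambda>n x. blinfun_apply R (grad (G1 n) x) - g1 x) (\<lambda>x. 0)"
    using G1(3) unfolding Lp_conv_0_iff[of M p _ g1] .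
  have B: "Lp_conv M p (\<lambda>n x. (- 1) *\<^sub>R (blinfun_apply R (grad (G2 n) x) - g2 x)) (\<lambda>x. 0)"
    by (rule Lp_scale[OF p0 _ _ G2(3)[unfolded Lp_conv_0_iff[of M p _ g2]], where C=1]) auto
  have "Lp_conv M p (\<lambda>n x. (blinfun_apply R (grad (G1 n) x) - g1 x) + (- 1) *\<^sub>R (blinfun_apply R (grad (G2 n) x) - g2 x)) (\<lambda>x. 0)"
    by (rule Lp_add[OF p0 _ _ A B]) measurable
  then have conv: "Lp_conv M p (\<lambda>n x. blinfun_apply R (grad (\<Phi> n) x)) (\<lambda>x. g1 x - g2 x)"
    unfolding Lp_conv_0_iff[of M p _ "\<lambda>x. g1 x - g2 x"]
    by (rule Lp_cong_AE) (auto simp: \<Phi>g algebra_simps)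
  have gL: "in_Lp M p (\<lambda>x. g1 x - g2 x)"
  proof -
    have "in_Lp M p (\<lambda>x. (- 1::real) *\<^sub>R g2 x)" by (rule in_Lp_scale[OF p0 g2L, where C=1]) auto
    from in_Lp_add[OF p0 g1L this] show ?thesis by simp
  qed
  have "AE x in M. g1 x - g2 x = 0"
    by (rule closab_core[OF P sets standing p \<Phi>C \<Phi>b \<Phi>0 conv gL])
  then show ?thesis by auto
qed

lemma Linf_facts:
  assumes P: "prob_space M" and L: "in_Linf M \<phi>"
  shows "Linf_norm M \<phi> \<ge> 0" "AE x in M. \<bar>\<phi> x\<bar> \<le> Linf_norm M \<phi>"
proof -
  interpret prob_space M by (rule P)
  obtain C where [measurable]: "\<phi> \<in> borel_measurable M" and C: "AE x in M. \<bar>\<phi> x\<bar> \<le> C"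
    using L unfolding in_Linf_def by blast
  define E where "E = esssup M (\<lambda>x. ereal \<bar>\<phi> x\<bar>)"
  have ne: "emeasure M (space M) \<noteq> 0" by (simp add: emeasure_space_1)
  have AE: "AE x in M. ereal \<bar>\<phi> x\<bar> \<le> E" unfolding E_def by (rule esssup_AE)
  have "E \<le> esssup M (\<lambda>x. ereal C)" unfolding E_def
    by (rule esssup_AE_mono) (use C in \<open>auto elim: eventually_mono\<close>)
  then have EC: "E \<le> ereal C" using esssup_const[OF ne, of "ereal C"] by simp
  have "esssup M (\<lambda>x. 0::ereal) \<le> E" unfolding E_def
    by (rule esssup_AE_mono) auto
  then have E0: "0 \<le> E" using esssup_const[OF ne, of "0::ereal"] by simp
  obtain a where a: "E = ereal a" using EC E0 by (cases E) auto
  have "Linf_norm M \<phi> = a" unfolding Linf_norm_def E_def[symmetric] a by simp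
  then show "Linf_norm M \<phi> \<ge> 0" "AE x in M. \<bar>\<phi> x\<bar> \<le> Linf_norm M \<phi>"
    using E0 AE unfolding a by auto
qed

lemma Lp_conv_const0:
  fixes f :: "'a \<Rightarrow> 'b::real_normed_vector"
  assumes "AE x in M. f x = 0" "p > 0"
  shows "Lp_conv M p (\<lambda>n x. 0) f"
proof -
  have "(\<integral>\<^sup>+ x. ennreal (norm (0 - f x) powr p) \<partial>M) = (\<integral>\<^sup>+ x. 0 \<partial>M)"
    using assms(1) by (intro nn_integral_cong_AE) (auto elim: eventually_mono)
  then show ?thesis unfolding Lp_conv_def by simp
qed

theorem lemma2p5:
  fixes M :: "'a::{real_inner,polish_space} measure"
    and R :: "'a \<Rightarrow>\<^sub>L 'a"
    and p :: real
  assumes prob: "prob_space M"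
    and borel: "sets M = sets borel"
    and standing: "\<forall>z. \<exists>v. (\<forall>r>1. in_Lp M r v) \<and>
        (\<forall>\<phi>\<in>C1b. (\<integral>x. blinfun_apply R (grad \<phi> x) \<bullet> z \<partial>M) = (\<integral>x. v x * \<phi> x \<partial>M))"
    and p: "1 < p"
  shows
    "(\<forall>\<phi> \<delta>. \<phi> \<in> W1p M R p \<and> in_Linf M \<phi> \<and> \<delta> > 0 \<longrightarrow>
        (\<exists>F. (\<forall>n. F n \<in> C1b)
            \<and> (\<forall>n x. \<bar>F n x\<bar> \<le> (1 + \<delta>) * Linf_norm M \<phi>)
            \<and> Lp_conv M p F \<phi>
            \<and> (\<forall>g. Mp_graph M R p \<phi> g \<longrightarrow>
                   Lp_conv M p (\<lambda>n x. blinfun_apply R (grad (F n) x)) g)))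
     \<and>
     (\<forall>\<phi> \<psi> g\<phi> g\<psi>. in_Linf M \<phi> \<and> in_Linf M \<psi> \<and>
        Mp_graph M R p \<phi> g\<phi> \<and> Mp_graph M R p \<psi> g\<psi> \<longrightarrow>
        (\<lambda>x. \<phi> x * \<psi> x) \<in> W1p M R p \<and>
        Mp_graph M R p (\<lambda>x. \<phi> x * \<psi> x) (\<lambda>x. \<phi> x *\<^sub>R g\<psi> x + \<psi> x *\<^sub>R g\<phi> x))"
proof (intro conjI allI impI)
  have p0: "p > 0" using p by simp
  have fm: "finite_measure M" using prob by (simp add: prob_space_def)
  fix \<phi> :: "'a \<Rightarrow> real" and \<delta> :: real
  assume asm: "\<phi> \<in> W1p M R p \<and> in_Linf M \<phi> \<and> \<delta> > 0"
  then have W: "\<phi> \<in> W1p M R p" and Li: "in_Linf M \<phi>" and \<delta>: "\<delta> > 0" by auto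
  obtain g0 where g0: "Mp_graph M R p \<phi> g0" using W unfolding W1p_def by blast
  define a where "a = Linf_norm M \<phi>"
  have a0: "a \<ge> 0" and abd: "AE x in M. \<bar>\<phi> x\<bar> \<le> a"
    using Linf_facts[OF prob Li] unfolding a_def by auto
  show "\<exists>F. (\<forall>n. F n \<in> C1b)
            \<and> (\<forall>n x. \<bar>F n x\<bar> \<le> (1 + \<delta>) * Linf_norm M \<phi>)
            \<and> Lp_conv M p F \<phi>
            \<and> (\<forall>g. Mp_graph M R p \<phi> g \<longrightarrow>
                   Lp_conv M p (\<lambda>n x. blinfun_apply R (grad (F n) x)) g)"
  proof (cases "a = 0")
    case True
    have \<phi>0: "AE x in M. \<phi> x = 0" using abd True by (auto elim: eventually_mono)
    have c1: "\<forall>n. (\<lambda>x. 0::real) \<in> C1b" using C1b_const(1) by blast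
    have c2: "\<forall>n x. \<bar>(0::real)\<bar> \<le> (1 + \<delta>) * Linf_norm M \<phi>" using True a_def by simp
    have c3: "Lp_conv M p (\<lambda>n x. 0) \<phi>" by (rule Lp_conv_const0[OF \<phi>0 p0])
    have c4: "Lp_conv M p (\<lambda>n x. blinfun_apply R (grad (\<lambda>x. 0::real) x)) g" if gg: "Mp_graph M R p \<phi> g" for g
    proof -
      have b1: "AE x in M. \<bar>\<phi> x\<bar> \<le> 1" using \<phi>0 by (auto elim: eventually_mono)
      obtain G where G: "\<And>n. G n \<in> C1b" "\<And>n x. \<bar>G n x\<bar> \<le> 1 + 1"
        "Lp_conv M p (\<lambda>n x. blinfun_apply R (grad (G n) x)) g" "AE x in M. (\<lambda>n. G n x) \<longlonglongrightarrow> \<phi> x"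
        using trunc[OF borel p0 gg zero_less_one zero_less_one b1] by blast
      have G0: "AE x in M. (\<lambda>n. G n x) \<longlonglongrightarrow> 0"
        using G(4) \<phi>0 by eventually_elim simp
      have gL: "in_Lp M p g" using gg by (simp add: Mp_graph_def)
      have "AE x in M. g x = 0" by (rule closab_core[OF prob borel standing p G(1) G(2) G0 G(3) gL])
      then show ?thesis using Lp_conv_const0[OF _ p0, of g M] by (simp add: C1b_const(2))
    qed
    show ?thesis
    proof (rule exI[of _ "\<lambda>n x. 0::real"], intro conjI allI impI)
      show "(\<lambda>x. 0::real) \<in> C1b" for n by (rule C1b_const(1))
      show "\<bar>0::real\<bar> \<le> (1 + \<delta>) * Linf_norm M \<phi>" for n x using True a_def by simp
      show "Lp_conv M p (\<lambda>n x. 0) \<phi>" by (rule c3)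
      show "Lp_conv M p (\<lambda>n x. blinfun_apply R (grad (\<lambda>x. 0::real) x)) g" if "Mp_graph M R p \<phi> g" for g
        using c4[OF that] .
    qed
  next
    case False
    then have apos: "a > 0" using a0 by simp
    have ba: "\<delta> * a > 0" using \<delta> apos by simp
    obtain G where G: "\<And>n. G n \<in> C1b" "\<And>n x. \<bar>G n x\<bar> \<le> a + \<delta> * a" "Lp_conv M p G \<phi>"
        "Lp_conv M p (\<lambda>n x. blinfun_apply R (grad (G n) x)) g0"
      using trunc[OF borel p0 g0 apos ba abd] by blast
    have c2: "\<forall>n x. \<bar>G n x\<bar> \<le> (1 + \<delta>) * Linf_norm M \<phi>"
      using G(2) unfolding a_def by (simp add: algebra_simps)
    have c4: "Lp_conv M p (\<lambda>n x. blinfun_apply R (grad (G n) x)) g" if gg: "Mp_graph M R p \<phi> g" for g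
    proof -
      have "AE x in M. g0 x = g x" by (rule closab[OF prob borel standing p g0 gg apos abd])
      then show ?thesis using G(4) by (intro Lp_cong_AE[OF G(4)]) (auto elim: eventually_mono)
    qed
    show ?thesis using G(1) c2 G(3) c4 by blast
  qed
next
  have p0: "p > 0" using p by simp
  have fm: "finite_measure M" using prob by (simp add: prob_space_def)
  fix \<phi> \<psi> :: "'a \<Rightarrow> real" and g\<phi> g\<psi> :: "'a \<Rightarrow> 'a"
  assume asm: "in_Linf M \<phi> \<and> in_Linf M \<psi> \<and> Mp_graph M R p \<phi> g\<phi> \<and> Mp_graph M R p \<psi> g\<psi>"
  then have L\<phi>: "in_Linf M \<phi>" and L\<psi>: "in_Linf M \<psi>" and G\<phi>: "Mp_graph M R p \<phi> g\<phi>"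
    and G\<psi>: "Mp_graph M R p \<psi> g\<psi>" by auto
  obtain C\<phi> where [measurable]: "\<phi> \<in> borel_measurable M" and C\<phi>: "AE x in M. \<bar>\<phi> x\<bar> \<le> C\<phi>"
    using L\<phi> unfolding in_Linf_def by blast
  obtain C\<psi> where [measurable]: "\<psi> \<in> borel_measurable M" and C\<psi>: "AE x in M. \<bar>\<psi> x\<bar> \<le> C\<psi>"
    using L\<psi> unfolding in_Linf_def by blast
  define A\<phi> where "A\<phi> = \<bar>C\<phi>\<bar> + 1"
  define A\<psi> where "A\<psi> = \<bar>C\<psi>\<bar> + 1"
  have A\<phi>: "A\<phi> > 0" "AE x in M. \<bar>\<phi> x\<bar> \<le> A\<phi>" unfolding A\<phi>_def using C\<phi> by (auto elim: eventually_mono)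
  have A\<psi>: "A\<psi> > 0" "AE x in M. \<bar>\<psi> x\<bar> \<le> A\<psi>" unfolding A\<psi>_def using C\<psi> by (auto elim: eventually_mono)
  have g\<phi>L: "in_Lp M p g\<phi>" and g\<psi>L: "in_Lp M p g\<psi>" using G\<phi> G\<psi> by (auto simp: Mp_graph_def)
  have [measurable]: "g\<phi> \<in> borel_measurable M" "g\<psi> \<in> borel_measurable M"
    using g\<phi>L g\<psi>L by (auto simp: in_Lp_def)
  obtain \<Phi> where \<Phi>: "\<And>n. \<Phi> n \<in> C1b" "\<And>n x. \<bar>\<Phi> n x\<bar> \<le> A\<phi> + 1" "Lp_conv M p \<Phi> \<phi>"
      "Lp_conv M p (\<lambda>n x. blinfun_apply R (grad (\<Phi> n) x)) g\<phi>" "AE x in M. (\<lambda>n. \<Phi> n x) \<longlonglongrightarrow> \<phi> x"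
    using trunc[OF borel p0 G\<phi> A\<phi>(1) zero_less_one A\<phi>(2)] by blast
  obtain \<Psi> where \<Psi>: "\<And>n. \<Psi> n \<in> C1b" "\<And>n x. \<bar>\<Psi> n x\<bar> \<le> A\<psi> + 1" "Lp_conv M p \<Psi> \<psi>"
      "Lp_conv M p (\<lambda>n x. blinfun_apply R (grad (\<Psi> n) x)) g\<psi>" "AE x in M. (\<lambda>n. \<Psi> n x) \<longlonglongrightarrow> \<psi> x"
    using trunc[OF borel p0 G\<psi> A\<psi>(1) zero_less_one A\<psi>(2)] by blast
  have [measurable]: "\<Phi> n \<in> borel_measurable M" "\<Psi> n \<in> borel_measurable M" for n
    using C1b_meas[OF borel \<Phi>(1)] C1b_meas[OF borel \<Psi>(1)] by auto
  have [measurable]: "(\<lambda>x. blinfun_apply R (grad (\<Phi> n) x)) \<in> borel_measurable M"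
      "(\<lambda>x. blinfun_apply R (grad (\<Psi> n) x)) \<in> borel_measurable M" for n
    using grad_meas[OF borel \<Phi>(1)] grad_meas[OF borel \<Psi>(1)] by auto
  have A\<phi>1: "AE x in M. \<bar>\<phi> x\<bar> \<le> A\<phi> + 1" using A\<phi>(2) by (auto elim: eventually_mono)
  have A\<psi>1: "AE x in M. \<bar>\<psi> x\<bar> \<le> A\<psi> + 1" using A\<psi>(2) by (auto elim: eventually_mono)
  define F where "F n x = \<Phi> n x * \<Psi> n x" for n x
  have FC: "\<forall>n. F n \<in> C1b" unfolding F_def[abs_def] using C1b_mult(1)[OF \<Phi>(1) \<Psi>(1)] by blast
  have \<psi>L: "in_Lp M p \<psi>" by (rule in_Lp_bounded[OF fm _ A\<psi>(2) p0]) measurable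
  have Fc: "Lp_conv M p F (\<lambda>x. \<phi> x * \<psi> x)"
    using Lp_prod[OF p0 _ _ _ _ \<Phi>(2) A\<phi>1 \<Phi>(5) \<Psi>(3)] \<psi>L unfolding F_def[abs_def]
    by (simp add: in_Lp_def)
  have RF: "blinfun_apply R (grad (F n) x) = \<Phi> n x *\<^sub>R blinfun_apply R (grad (\<Psi> n) x)
      + \<Psi> n x *\<^sub>R blinfun_apply R (grad (\<Phi> n) x)" for n x
    unfolding F_def[abs_def] C1b_mult(2)[OF \<Phi>(1) \<Psi>(1)]
    by (simp add: blinfun.add_right blinfun.scaleR_right)
  have T1: "Lp_conv M p (\<lambda>n x. \<Phi> n x *\<^sub>R blinfun_apply R (grad (\<Psi> n) x)) (\<lambda>x. \<phi> x *\<^sub>R g\<psi> x)"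
    using Lp_prod[OF p0 _ _ _ _ \<Phi>(2) A\<phi>1 \<Phi>(5) \<Psi>(4)] g\<psi>L by (simp add: in_Lp_def)
  have T2: "Lp_conv M p (\<lambda>n x. \<Psi> n x *\<^sub>R blinfun_apply R (grad (\<Phi> n) x)) (\<lambda>x. \<psi> x *\<^sub>R g\<phi> x)"
    using Lp_prod[OF p0 _ _ _ _ \<Psi>(2) A\<psi>1 \<Psi>(5) \<Phi>(4)] g\<phi>L by (simp add: in_Lp_def)
  have "Lp_conv M p (\<lambda>n x. (\<Phi> n x *\<^sub>R blinfun_apply R (grad (\<Psi> n) x) - \<phi> x *\<^sub>R g\<psi> x)
      + (\<Psi> n x *\<^sub>R blinfun_apply R (grad (\<Phi> n) x) - \<psi> x *\<^sub>R g\<phi> x)) (\<lambda>x. 0)"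
    by (rule Lp_add[OF p0 _ _ T1[unfolded Lp_conv_0_iff[of M p _ "\<lambda>x. \<phi> x *\<^sub>R g\<psi> x"]]
          T2[unfolded Lp_conv_0_iff[of M p _ "\<lambda>x. \<psi> x *\<^sub>R g\<phi> x"]]]) measurable
  then have RFc: "Lp_conv M p (\<lambda>n x. blinfun_apply R (grad (F n) x)) (\<lambda>x. \<phi> x *\<^sub>R g\<psi> x + \<psi> x *\<^sub>R g\<phi> x)"
    unfolding Lp_conv_0_iff[of M p _ "\<lambda>x. \<phi> x *\<^sub>R g\<psi> x + \<psi> x *\<^sub>R g\<phi> x"]
    by (rule Lp_cong_AE) (auto simp: RF algebra_simps)
  have "AE x in M. \<bar>\<phi> x * \<psi> x\<bar> \<le> A\<phi> * A\<psi>"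
    using A\<phi>(2) A\<psi>(2)
  proof eventually_elim
    case (elim x)
    then show ?case by (simp add: abs_mult mult_mono)
  qed
  then have L1: "in_Lp M p (\<lambda>x. \<phi> x * \<psi> x)"
    by (rule in_Lp_bounded[OF fm _ _ p0, rotated]) measurable
  have L2: "in_Lp M p (\<lambda>x. \<phi> x *\<^sub>R g\<psi> x + \<psi> x *\<^sub>R g\<phi> x)"
    by (intro in_Lp_add[OF p0] in_Lp_scale[OF p0 g\<psi>L _ A\<phi>(2)] in_Lp_scale[OF p0 g\<phi>L _ A\<psi>(2)]) measurable
  have MG: "Mp_graph M R p (\<lambda>x. \<phi> x * \<psi> x) (\<lambda>x. \<phi> x *\<^sub>R g\<psi> x + \<psi> x *\<^sub>R g\<phi> x)"
    unfolding Mp_graph_def using L1 L2 FC Fc RFc by blast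
  then show "(\<lambda>x. \<phi> x * \<psi> x) \<in> W1p M R p" unfolding W1p_def by blast
  show "Mp_graph M R p (\<lambda>x. \<phi> x * \<psi> x) (\<lambda>x. \<phi> x *\<^sub>R g\<psi> x + \<psi> x *\<^sub>R g\<phi> x)" using MG .
qed

end
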